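(* Let $(R,{\mathfrak m})$ be a $d$-dimensional Cohen–Macaulay local ring, $I=(f_1,\ldots,f_n)$ an ideal minimally generated by $n$ elements with $g=\mathrm{ht}(I)\ge1$, $B=R[y_1,\ldots,y_n]$, and let $\mathcal Z_\bullet$ and $\mathfrak T_\bullet$ be the complexes described in the context. Then the complex $\mathfrak T_\bullet$ and the truncation $0\to\mathcal Z_{n-g}\to\cdots\to\mathcal Z_0\to0$ can be spliced together into a complex $$\mathfrak L_\bullet:\quad 0\to\mathfrak T_{g-2}\to\cdots\to\mathfrak T_1\to\mathfrak T_0\to\mathcal Z_{n-g}\to\cdots\to\mathcal Z_0\to0,$$ where $\mathfrak T_0\to\mathcal Z_{n-g}$ is the composite of $\partial_{\mathbf f}:\wedge^{n-g+2}R^n\otimes_RB(-n+g-1)\to Z_{n-g+1}\otimes_RB(-n+g-1)=\mathcal Z_{n-g+1}$ with the differential $\mathcal Z_{n-g+1}\to\mathcal Z_{n-g}$. If $\mathcal Z_\bullet$ is acyclic, then $\mathfrak L_\bullet$ is acyclic.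
   Context: $B$ is standard graded with $\deg y_j=1$. $K_\bullet=\wedge^\bullet R^n$ is the Koszul complex of $f_1,\ldots,f_n$ with differential $\partial_{\mathbf f}$, and $Z_i$ its module of $i$-cycles; $\partial_{\mathbf y}$ is the differential of the Koszul complex $K(y_1,\ldots,y_n;B)=\wedge^\bullet R^n\otimes_R B$ (degree $1$ in $\mathbf y$). The approximation complex $\mathcal Z_\bullet$ has $\mathcal Z_i=Z_i\otimes_RB(-i)$ for $0\le i\le n-1$, with differential induced by $\partial_{\mathbf y}$; acyclic means $H_i=0$ for $i>0$. Let $\mathfrak D$ be the double complex with entries $\mathfrak D(c,r)=\wedge^{n-g+2+c+r}R^n\otimes_RB(-n+g-1-c)$ for $0\le c\le g-2$, $r\ge0$ (zero when $n-g+2+c+r>n$), with horizontal maps $\partial_{\mathbf y}:\mathfrak D(c,r)\to\mathfrak D(c-1,r)$ and vertical maps $\partial_{\mathbf f}:\mathfrak D(c,r)\to\mathfrak D(c,r-1)$. $\mathfrak T_\bullet$ is its total complex, $\mathfrak T_k=\bigoplus_{c+r=k}\mathfrak D(c,r)$; thus $\mathfrak T_0=\wedge^{n-g+2}R^n\otimes_RB(-n+g-1)$ and $\mathfrak T_{g-2}=\bigoplus_{j=1}^{g-1}\wedge^nR^n\otimes_RB(-n+j)$. *)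

theory Defs
  imports Main "HOL-Library.Poly_Mapping" "HOL-Library.Function_Algebras"
begin

section \<open>Commutative algebra over a commutative ring (the whole type is the ring R)\<close>

definition is_ideal :: "'a::comm_ring_1 set \<Rightarrow> bool" where
  "is_ideal I \<longleftrightarrow> 0 \<in> I \<and> (\<forall>x\<in>I. \<forall>y\<in>I. x + y \<in> I) \<and> (\<forall>r. \<forall>x\<in>I. r * x \<in> I)"

definition ideal_gen :: "(nat \<Rightarrow> 'a::comm_ring_1) \<Rightarrow> nat \<Rightarrow> 'a set" where
  "ideal_gen h k = {\<Sum>j<k. r j * h j | r. True}"

definition is_prime_ideal :: "'a::comm_ring_1 set \<Rightarrow> bool" where
  "is_prime_ideal P \<longleftrightarrow> is_ideal P \<and> P \<noteq> UNIV \<and> (\<forall>a b. a * b \<in> P \<longrightarrow> a \<in> P \<or> b \<in> P)"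

definition is_maximal_ideal :: "'a::comm_ring_1 set \<Rightarrow> bool" where
  "is_maximal_ideal M \<longleftrightarrow> is_ideal M \<and> M \<noteq> UNIV \<and>
     (\<forall>J. is_ideal J \<and> M \<subseteq> J \<longrightarrow> J = M \<or> J = UNIV)"

definition noetherian_ring :: "'a::comm_ring_1 itself \<Rightarrow> bool" where
  "noetherian_ring _ \<longleftrightarrow> (\<forall>I::'a set. is_ideal I \<longrightarrow> (\<exists>h k. I = ideal_gen h k))"

definition local_ring_max :: "'a::comm_ring_1 set \<Rightarrow> bool" where
  "local_ring_max m \<longleftrightarrow> noetherian_ring TYPE('a) \<and> is_maximal_ideal m \<and>
     (\<forall>M. is_maximal_ideal M \<longrightarrow> M = m)"

definition prime_chain :: "'a::comm_ring_1 set list \<Rightarrow> bool" where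
  "prime_chain ps \<longleftrightarrow> ps \<noteq> [] \<and> (\<forall>P\<in>set ps. is_prime_ideal P) \<and> sorted_wrt (\<subset>) ps"

definition krull_dim_eq :: "'a::comm_ring_1 itself \<Rightarrow> nat \<Rightarrow> bool" where
  "krull_dim_eq _ d \<longleftrightarrow>
     (\<exists>ps::'a set list. prime_chain ps \<and> length ps = d + 1) \<and>
     (\<forall>ps::'a set list. prime_chain ps \<longrightarrow> length ps \<le> d + 1)"

definition prime_height_eq :: "'a::comm_ring_1 set \<Rightarrow> nat \<Rightarrow> bool" where
  "prime_height_eq P h \<longleftrightarrow>
     (\<exists>ps. prime_chain ps \<and> last ps = P \<and> length ps = h + 1) \<and>
     (\<forall>ps. prime_chain ps \<and> last ps = P \<longrightarrow> length ps \<le> h + 1)"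

definition ideal_height_eq :: "'a::comm_ring_1 set \<Rightarrow> nat \<Rightarrow> bool" where
  "ideal_height_eq I g \<longleftrightarrow>
     (\<exists>P. is_prime_ideal P \<and> I \<subseteq> P \<and> prime_height_eq P g) \<and>
     (\<forall>P h. is_prime_ideal P \<and> I \<subseteq> P \<and> prime_height_eq P h \<longrightarrow> g \<le> h)"

definition regular_seq_in :: "'a::comm_ring_1 set \<Rightarrow> (nat \<Rightarrow> 'a) \<Rightarrow> nat \<Rightarrow> bool" where
  "regular_seq_in m x k \<longleftrightarrow> (\<forall>i<k. x i \<in> m) \<and> ideal_gen x k \<noteq> UNIV \<and>
     (\<forall>i<k. \<forall>r. r * x i \<in> ideal_gen x i \<longrightarrow> r \<in> ideal_gen x i)"

definition depth_eq :: "'a::comm_ring_1 set \<Rightarrow> nat \<Rightarrow> bool" where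
  "depth_eq m t \<longleftrightarrow> (\<exists>x. regular_seq_in m x t) \<and> (\<forall>x k. regular_seq_in m x k \<longrightarrow> k \<le> t)"

definition cohen_macaulay_local :: "'a::comm_ring_1 set \<Rightarrow> nat \<Rightarrow> bool" where
  "cohen_macaulay_local m d \<longleftrightarrow> local_ring_max m \<and> krull_dim_eq TYPE('a) d \<and> depth_eq m d"

definition minimally_generates :: "(nat \<Rightarrow> 'a::comm_ring_1) \<Rightarrow> nat \<Rightarrow> 'a set \<Rightarrow> bool" where
  "minimally_generates f n I \<longleftrightarrow> I = ideal_gen f n \<and> (\<forall>k<n. \<forall>h. ideal_gen h k \<noteq> I)"

type_synonym 'a polyB = "(nat \<Rightarrow>\<^sub>0 nat) \<Rightarrow>\<^sub>0 'a"

definition constB :: "'a::comm_ring_1 \<Rightarrow> 'a polyB" where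
  "constB r = Poly_Mapping.single 0 r"

definition varB :: "nat \<Rightarrow> 'a::comm_ring_1 polyB" where
  "varB j = Poly_Mapping.single (Poly_Mapping.single j 1) 1"

text \<open>Elements of wedge^i B^n: coefficient functions on subsets S of {0..<n} with |S| = i
  (coefficient of e_S, S listed increasingly).\<close>
definition ext :: "nat \<Rightarrow> nat \<Rightarrow> (nat set \<Rightarrow> 'b::zero) set" where
  "ext n i = {x. \<forall>S. x S \<noteq> 0 \<longrightarrow> S \<subseteq> {..<n} \<and> card S = i}"

text \<open>Koszul differential of a_0,...,a_(n-1):
  e_S \<mapsto> sum_k (-1)^k a_(s_k) e_(S - s_k), where s_0 < s_1 < ...\<close>
definition kos :: "nat \<Rightarrow> (nat \<Rightarrow> 'b::comm_ring_1) \<Rightarrow> (nat set \<Rightarrow> 'b) \<Rightarrow> (nat set \<Rightarrow> 'b)" where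
  "kos n a x = (\<lambda>T. if T \<subseteq> {..<n} then
      (\<Sum>j\<in>{..<n} - T. (-1) ^ card {t\<in>T. t < j} * a j * x (insert j T)) else 0)"

definition dF :: "nat \<Rightarrow> (nat \<Rightarrow> 'a::comm_ring_1) \<Rightarrow> (nat set \<Rightarrow> 'a polyB) \<Rightarrow> (nat set \<Rightarrow> 'a polyB)" where
  "dF n f = kos n (\<lambda>j. constB (f j))"

definition dY :: "nat \<Rightarrow> (nat set \<Rightarrow> 'a::comm_ring_1 polyB) \<Rightarrow> (nat set \<Rightarrow> 'a polyB)" where
  "dY n = kos n varB"

text \<open>Z_i (x)_R B, realised (B being R-free) as the d_f-cycles in wedge^i B^n; zero for i \<ge> n.\<close>
definition Zmod :: "nat \<Rightarrow> (nat \<Rightarrow> 'a::comm_ring_1) \<Rightarrow> nat \<Rightarrow> (nat set \<Rightarrow> 'a polyB) set" where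
  "Zmod n f i = (if i < n then {x \<in> ext n i. dF n f x = 0} else {0})"

definition Z_acyclic :: "nat \<Rightarrow> (nat \<Rightarrow> 'a::comm_ring_1) \<Rightarrow> bool" where
  "Z_acyclic n f \<longleftrightarrow> (\<forall>i. 1 \<le> i \<longrightarrow> i < n \<longrightarrow>
     (\<forall>x\<in>Zmod n f i. dY n x = 0 \<longrightarrow> (\<exists>z\<in>Zmod n f (i+1). dY n z = x)))"

text \<open>An element of T_k = (+)_{c+r=k, 0<=c<=g-2} D(c,r) is a family x indexed by c; the summand
  D(c,k-c) is wedge^(n-g+2+k) B^n (grading shifts are omitted).\<close>
definition Tmod :: "nat \<Rightarrow> nat \<Rightarrow> nat \<Rightarrow> (nat \<Rightarrow> nat set \<Rightarrow> 'a::comm_ring_1 polyB) set" where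
  "Tmod n g k = {x. \<forall>c. if c + 2 \<le> g \<and> c \<le> k then x c \<in> ext n (n + 2 + k - g) else x c = 0}"

text \<open>Total differential T_k \<rightarrow> T_(k-1): horizontal d_y D(c+1,r) \<rightarrow> D(c,r) plus
  vertical d_f D(c,r+1) \<rightarrow> D(c,r).\<close>
definition Tdiff :: "nat \<Rightarrow> (nat \<Rightarrow> 'a::comm_ring_1) \<Rightarrow> nat \<Rightarrow> nat \<Rightarrow>
    (nat \<Rightarrow> nat set \<Rightarrow> 'a polyB) \<Rightarrow> (nat \<Rightarrow> nat set \<Rightarrow> 'a polyB)" where
  "Tdiff n f g k x = (\<lambda>c. if c + 2 \<le> g \<and> c + 1 \<le> k then dF n f (x c) + dY n (x (c + 1)) else 0)"

definition Taug :: "nat \<Rightarrow> (nat \<Rightarrow> 'a::comm_ring_1) \<Rightarrow> (nat \<Rightarrow> nat set \<Rightarrow> 'a polyB) \<Rightarrow> (nat set \<Rightarrow> 'a polyB)" where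
  "Taug n f x = dY n (dF n f (x 0))"

text \<open>L is a complex: all maps land in the right modules and consecutive composites vanish
  (the Z-part is a complex by construction).\<close>
definition L_is_complex :: "nat \<Rightarrow> (nat \<Rightarrow> 'a::comm_ring_1) \<Rightarrow> nat \<Rightarrow> bool" where
  "L_is_complex n f g \<longleftrightarrow>
     (\<forall>x\<in>Tmod n g 0. Taug n f x \<in> Zmod n f (n - g)) \<and>
     (\<forall>k. \<forall>x\<in>Tmod n g (Suc k). Tdiff n f g (Suc k) x \<in> Tmod n g k) \<and>
     (0 < n - g \<longrightarrow> (\<forall>x\<in>Tmod n g 0. dY n (Taug n f x) = 0)) \<and>
     (\<forall>x\<in>Tmod n g 1. Taug n f (Tdiff n f g 1 x) = 0) \<and>
     (\<forall>k. \<forall>x\<in>Tmod n g (Suc (Suc k)). Tdiff n f g (Suc k) (Tdiff n f g (Suc (Suc k)) x) = 0)"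

text \<open>L is acyclic: homology vanishes at every position of L except position 0 (Z_0).\<close>
definition L_acyclic :: "nat \<Rightarrow> (nat \<Rightarrow> 'a::comm_ring_1) \<Rightarrow> nat \<Rightarrow> bool" where
  "L_acyclic n f g \<longleftrightarrow>
     (\<forall>i. 1 \<le> i \<longrightarrow> i < n - g \<longrightarrow>
        (\<forall>x\<in>Zmod n f i. dY n x = 0 \<longrightarrow> (\<exists>z\<in>Zmod n f (i+1). dY n z = x))) \<and>
     (1 \<le> n - g \<longrightarrow>
        (\<forall>x\<in>Zmod n f (n - g). dY n x = 0 \<longrightarrow> (\<exists>t\<in>Tmod n g 0. Taug n f t = x))) \<and>
     (\<forall>x\<in>Tmod n g 0. Taug n f x = 0 \<longrightarrow> (\<exists>z\<in>Tmod n g 1. Tdiff n f g 1 z = x)) \<and>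
     (\<forall>k. \<forall>x\<in>Tmod n g (Suc k). Tdiff n f g (Suc k) x = 0 \<longrightarrow>
        (\<exists>z\<in>Tmod n g (Suc (Suc k)). Tdiff n f g (Suc (Suc k)) z = x))"

end

theory Submission
  imports Defs
begin

definition sg :: "nat set \<Rightarrow> nat \<Rightarrow> 'b::comm_ring_1" where
  "sg T j = (-1) ^ card {t\<in>T. t < j}"

lemma kos_sg: "kos n a x = (\<lambda>T. if T \<subseteq> {..<n} then
      (\<Sum>j\<in>{..<n} - T. sg T j * a j * x (insert j T)) else 0)"
  unfolding kos_def sg_def by simp

lemma sg_sq: "sg T j * sg T j = (1::'b::comm_ring_1)"
  unfolding sg_def by (simp add: power_mult_distrib[symmetric])

lemma card_filter_insert:
  assumes "finite U" "j \<notin> U"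
  shows "card {t\<in>insert j U. t < k} = card {t\<in>U. t < k} + (if j < k then 1 else 0)"
proof (cases "j < k")
  case True
  then have "{t\<in>insert j U. t < k} = insert j {t\<in>U. t < k}" by auto
  then show ?thesis using assms True by simp
next
  case False
  then have "{t\<in>insert j U. t < k} = {t\<in>U. t < k}" by auto
  then show ?thesis using False by simp
qed

lemma sg_insert:
  assumes "finite U" "j \<notin> U"
  shows "sg (insert j U) k = (if j < k then - sg U k else (sg U k :: 'b::comm_ring_1))"
  unfolding sg_def using card_filter_insert[OF assms, of k] by simp

lemma sg_insert_self: "sg (insert j U) j = sg U j"
proof -
  have "{t\<in>insert j U. t < j} = {t\<in>U. t < j}" by auto
  then show ?thesis unfolding sg_def by simp
qed

lemma sg_remove_self: "sg (U - {j}) j = sg U j"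
proof -
  have "{t\<in>U - {j}. t < j} = {t\<in>U. t < j}" by auto
  then show ?thesis unfolding sg_def by simp
qed

lemma antisym_double_sum:
  fixes F :: "nat \<Rightarrow> nat \<Rightarrow> 'b::comm_ring_1"
  assumes "finite A" "\<And>j k. j \<in> A \<Longrightarrow> k \<in> A \<Longrightarrow> j \<noteq> k \<Longrightarrow> F k j = - F j k"
  shows "(\<Sum>j\<in>A. \<Sum>k\<in>A - {j}. F j k) = 0"
  using assms
proof (induction A rule: finite_induct)
  case empty
  then show ?case by simp
next
  case (insert x A)
  have IH: "(\<Sum>j\<in>A. \<Sum>k\<in>A - {j}. F j k) = 0"
    using insert.IH insert.prems by blast
  have "(\<Sum>j\<in>insert x A. \<Sum>k\<in>insert x A - {j}. F j k)
      = (\<Sum>k\<in>insert x A - {x}. F x k) + (\<Sum>j\<in>A. \<Sum>k\<in>insert x A - {j}. F j k)"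
    using insert.hyps by (simp add: sum.insert)
  also have "(\<Sum>k\<in>insert x A - {x}. F x k) = (\<Sum>k\<in>A. F x k)"
    using insert.hyps by (intro sum.cong) auto
  also have "(\<Sum>j\<in>A. \<Sum>k\<in>insert x A - {j}. F j k) = (\<Sum>j\<in>A. F j x + (\<Sum>k\<in>A - {j}. F j k))"
  proof (intro sum.cong refl)
    fix j assume "j \<in> A"
    then have "insert x A - {j} = insert x (A - {j})" "x \<notin> A - {j}" using insert.hyps by auto
    then show "(\<Sum>k\<in>insert x A - {j}. F j k) = F j x + (\<Sum>k\<in>A - {j}. F j k)"
      using insert.hyps by simp
  qed
  also have "\<dots> = (\<Sum>j\<in>A. F j x) + (\<Sum>j\<in>A. \<Sum>k\<in>A - {j}. F j k)"
    by (simp add: sum.distrib)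
  also have "(\<Sum>j\<in>A. F j x) = - (\<Sum>k\<in>A. F x k)"
  proof -
    have "(\<Sum>j\<in>A. F j x) = (\<Sum>j\<in>A. - F x j)"
      using insert.prems insert.hyps by (intro sum.cong refl) (metis insertCI)
    then show ?thesis by (simp add: sum_negf)
  qed
  finally show ?case using IH by simp
qed

lemma kos_kos:
  assumes "T \<subseteq> {..<n}"
  shows "kos n a (kos n b z) T = (\<Sum>j\<in>{..<n} - T. \<Sum>k\<in>({..<n} - T) - {j}.
      (sg T j * sg (insert j T) k) * (a j * b k) * z (insert k (insert j T)))"
proof -
  have "kos n a (kos n b z) T = (\<Sum>j\<in>{..<n} - T. sg T j * a j * kos n b z (insert j T))"
    using assms by (simp add: kos_sg)
  also have "\<dots> = (\<Sum>j\<in>{..<n} - T. \<Sum>k\<in>({..<n} - T) - {j}.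
      (sg T j * sg (insert j T) k) * (a j * b k) * z (insert k (insert j T)))"
  proof (intro sum.cong refl)
    fix j assume j: "j \<in> {..<n} - T"
    then have "insert j T \<subseteq> {..<n}" using assms by auto
    then have "kos n b z (insert j T) = (\<Sum>k\<in>{..<n} - insert j T. sg (insert j T) k * b k * z (insert k (insert j T)))"
      by (simp add: kos_sg)
    moreover have "{..<n} - insert j T = ({..<n} - T) - {j}" by auto
    ultimately show "sg T j * a j * kos n b z (insert j T) = (\<Sum>k\<in>({..<n} - T) - {j}.
      (sg T j * sg (insert j T) k) * (a j * b k) * z (insert k (insert j T)))"
      by (simp add: sum_distrib_left algebra_simps)
  qed
  finally show ?thesis .
qed

lemma sg_swap:
  assumes "finite T" "j \<notin> T" "k \<notin> T" "j \<noteq> k"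
  shows "sg T k * sg (insert k T) j = - (sg T j * sg (insert j T) k :: 'b::comm_ring_1)"
  using assms by (auto simp: sg_insert)

lemma kos_kos_zero: "kos n a (kos n a z) = 0"
proof
  fix T
  show "kos n a (kos n a z) T = 0 T"
  proof (cases "T \<subseteq> {..<n}")
    case True
    have fin: "finite T" using True finite_subset by blast
    show ?thesis
      unfolding kos_kos[OF True] zero_fun_def
    proof (rule antisym_double_sum)
      fix j k assume jk: "j \<in> {..<n} - T" "k \<in> {..<n} - T" "j \<noteq> k"
      have s: "sg T k * sg (insert k T) j = - (sg T j * sg (insert j T) k)"
        using sg_swap[OF fin] jk by auto
      have "(sg T k * sg (insert k T) j) * (a k * a j) * z (insert j (insert k T)) =
         (sg T k * sg (insert k T) j) * (a j * a k) * z (insert k (insert j T))"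
        by (simp add: insert_commute mult.commute)
      also have "\<dots> = - ((sg T j * sg (insert j T) k) * (a j * a k) * z (insert k (insert j T)))"
        by (simp only: s) simp
      finally show "(sg T k * sg (insert k T) j) * (a k * a j) * z (insert j (insert k T)) =
         - ((sg T j * sg (insert j T) k) * (a j * a k) * z (insert k (insert j T)))" .
    qed simp
  next
    case False
    then show ?thesis by (simp add: kos_def)
  qed
qed

lemma kos_anticomm: "kos n a (kos n b z) + kos n b (kos n a z) = 0"
proof
  fix T
  show "(kos n a (kos n b z) + kos n b (kos n a z)) T = 0 T"
  proof (cases "T \<subseteq> {..<n}")
    case True
    have fin: "finite T" using True finite_subset by blast
    have "(kos n a (kos n b z) + kos n b (kos n a z)) T =
      (\<Sum>j\<in>{..<n} - T. \<Sum>k\<in>({..<n} - T) - {j}.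
      (sg T j * sg (insert j T) k) * (a j * b k + b j * a k) * z (insert k (insert j T)))"
      unfolding plus_fun_def kos_kos[OF True]
      by (simp add: sum.distrib[symmetric] algebra_simps)
    also have "\<dots> = 0"
    proof (rule antisym_double_sum)
      fix j k assume jk: "j \<in> {..<n} - T" "k \<in> {..<n} - T" "j \<noteq> k"
      have s: "sg T k * sg (insert k T) j = - (sg T j * sg (insert j T) k)"
        using sg_swap[OF fin] jk by auto
      have "(sg T k * sg (insert k T) j) * (a k * b j + b k * a j) * z (insert j (insert k T)) =
         (sg T k * sg (insert k T) j) * (a j * b k + b j * a k) * z (insert k (insert j T))"
        by (simp add: insert_commute mult.commute add.commute)
      also have "\<dots> = - ((sg T j * sg (insert j T) k) * (a j * b k + b j * a k) * z (insert k (insert j T)))"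
        by (simp only: s) simp
      finally show "(sg T k * sg (insert k T) j) * (a k * b j + b k * a j) * z (insert j (insert k T)) =
         - ((sg T j * sg (insert j T) k) * (a j * b k + b j * a k) * z (insert k (insert j T)))" .
    qed simp
    finally show ?thesis by simp
  next
    case False
    then show ?thesis by (simp add: kos_def)
  qed
qed

definition wedge :: "nat \<Rightarrow> (nat \<Rightarrow> 'b::comm_ring_1) \<Rightarrow> (nat set \<Rightarrow> 'b) \<Rightarrow> (nat set \<Rightarrow> 'b)" where
  "wedge n c z = (\<lambda>T. if T \<subseteq> {..<n} then (\<Sum>k\<in>T. sg T k * c k * z (T - {k})) else 0)"

lemma sg_cross:
  assumes fin: "finite T" and k: "k \<in> T" and j: "j \<notin> T"
  shows "sg T j * sg (insert j T) k + sg T k * sg (T - {k}) j = (0::'b::comm_ring_1)"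
proof -
  define U where "U = T - {k}"
  have T: "T = insert k U" and kU: "k \<notin> U" and finU: "finite U" and jU: "j \<notin> U" and jk: "j \<noteq> k"
    using k j fin unfolding U_def by auto
  have 1: "sg T j = (if k < j then - sg U j else (sg U j :: 'b))"
    unfolding T by (simp add: sg_insert[OF finU kU])
  have "sg (insert j T) k = sg (insert k (insert j U)) k" unfolding T by (simp add: insert_commute)
  also have "\<dots> = sg (insert j U) k" by (rule sg_insert_self)
  also have "\<dots> = (if j < k then - sg U k else (sg U k :: 'b))" by (simp add: sg_insert[OF finU jU])
  finally have 2: "sg (insert j T) k = (if j < k then - sg U k else (sg U k :: 'b))" .
  have 3: "sg T k = (sg U k :: 'b)" unfolding T by (rule sg_insert_self)
  have 4: "sg (T - {k}) j = (sg U j :: 'b)" unfolding U_def ..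
  show ?thesis unfolding 1 2 3 4 using jk by (cases "j < k") auto
qed

lemma homotopy:
  assumes supp: "\<And>S. z S \<noteq> 0 \<Longrightarrow> S \<subseteq> {..<n}"
  shows "kos n a (wedge n c z) T + wedge n c (kos n a z) T = (\<Sum>j<n. c j * a j) * z T"
proof (cases "T \<subseteq> {..<n}")
  case False
  then have "z T = 0" using supp by blast
  then show ?thesis using False by (simp add: kos_def wedge_def)
next
  case True
  have fin: "finite T" using True finite_subset by blast
  define X where "X j k = sg T j * sg (insert j T) k * a j * c k * z (insert j (T - {k}))" for j k
  define Y where "Y k j = sg T k * sg (T - {k}) j * c k * a j * z (insert j (T - {k}))" for j k
  have A: "kos n a (wedge n c z) T = (\<Sum>j\<in>{..<n} - T. a j * c j * z T + (\<Sum>k\<in>T. X j k))"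
    unfolding kos_sg using True
  proof (simp, intro sum.cong refl)
    fix j assume j: "j \<in> {..<n} - T"
    then have sub: "insert j T \<subseteq> {..<n}" using True by auto
    have jT: "j \<notin> T" using j by simp
    have "wedge n c z (insert j T) = sg (insert j T) j * c j * z (insert j T - {j}) + (\<Sum>k\<in>T. sg (insert j T) k * c k * z (insert j T - {k}))"
      unfolding wedge_def using sub fin jT by simp
    also have "\<dots> = sg T j * c j * z T + (\<Sum>k\<in>T. sg (insert j T) k * c k * z (insert j (T - {k})))"
    proof -
      have "insert j T - {j} = T" using jT by auto
      moreover have "\<And>k. k \<in> T \<Longrightarrow> insert j T - {k} = insert j (T - {k})" using jT by auto
      ultimately show ?thesis by (simp add: sg_insert_self)
    qed
    finally have "sg T j * a j * wedge n c z (insert j T) = sg T j * a j * (sg T j * c j * z T) + (\<Sum>k\<in>T. X j k)"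
      by (simp add: X_def distrib_left sum_distrib_left algebra_simps)
    also have "sg T j * a j * (sg T j * c j * z T) = (sg T j * sg T j) * a j * c j * z T"
      by (simp add: algebra_simps)
    finally show "sg T j * a j * wedge n c z (insert j T) = a j * c j * z T + (\<Sum>k\<in>T. X j k)"
      by (simp add: sg_sq)
  qed
  have B: "wedge n c (kos n a z) T = (\<Sum>k\<in>T. c k * a k * z T + (\<Sum>j\<in>{..<n} - T. Y k j))"
    unfolding wedge_def using True
  proof (simp, intro sum.cong refl)
    fix k assume k: "k \<in> T"
    have sub: "T - {k} \<subseteq> {..<n}" using True by auto
    have eq: "{..<n} - (T - {k}) = insert k ({..<n} - T)" using k True by auto
    have kn: "k \<notin> {..<n} - T" using k by simp
    have "kos n a z (T - {k}) = sg (T - {k}) k * a k * z (insert k (T - {k})) + (\<Sum>j\<in>{..<n} - T. sg (T - {k}) j * a j * z (insert j (T - {k})))"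
      unfolding kos_sg using sub eq kn by simp
    also have "\<dots> = sg T k * a k * z T + (\<Sum>j\<in>{..<n} - T. sg (T - {k}) j * a j * z (insert j (T - {k})))"
      using k by (simp add: sg_remove_self insert_absorb)
    finally have "sg T k * c k * kos n a z (T - {k}) = (sg T k * sg T k) * c k * a k * z T + (\<Sum>j\<in>{..<n} - T. Y k j)"
      by (simp add: Y_def distrib_left sum_distrib_left algebra_simps)
    then show "sg T k * c k * kos n a z (T - {k}) = c k * a k * z T + (\<Sum>j\<in>{..<n} - T. Y k j)"
      by (simp add: sg_sq)
  qed
  have XY: "X j k + Y k j = 0" if "j \<in> {..<n} - T" "k \<in> T" for j k
  proof -
    have "X j k + Y k j = (sg T j * sg (insert j T) k + sg T k * sg (T - {k}) j) * (a j * c k * z (insert j (T - {k})))"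
      unfolding X_def Y_def by (simp add: algebra_simps)
    also have "\<dots> = 0"
    proof -
      have h: "sg T j * sg (insert j T) k + sg T k * sg (T - {k}) j = (0::'a)"
        using sg_cross[OF fin, of k j] that by simp
      show ?thesis by (subst h) simp
    qed
    finally show ?thesis .
  qed
  have cross: "(\<Sum>j\<in>{..<n} - T. \<Sum>k\<in>T. X j k) + (\<Sum>k\<in>T. \<Sum>j\<in>{..<n} - T. Y k j) = 0"
  proof -
    have "(\<Sum>k\<in>T. \<Sum>j\<in>{..<n} - T. Y k j) = (\<Sum>j\<in>{..<n} - T. \<Sum>k\<in>T. Y k j)"
      by (rule sum.swap)
    then have "(\<Sum>j\<in>{..<n} - T. \<Sum>k\<in>T. X j k) + (\<Sum>k\<in>T. \<Sum>j\<in>{..<n} - T. Y k j)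
       = (\<Sum>j\<in>{..<n} - T. \<Sum>k\<in>T. X j k + Y k j)"
      by (simp add: sum.distrib)
    also have "\<dots> = 0" using XY by simp
    finally show ?thesis .
  qed
  have diag: "(\<Sum>j\<in>{..<n} - T. a j * c j * z T) + (\<Sum>k\<in>T. c k * a k * z T) = (\<Sum>j<n. c j * a j) * z T"
  proof -
    have "(\<Sum>j<n. c j * a j) = (\<Sum>j\<in>{..<n} - T. c j * a j) + (\<Sum>j\<in>T. c j * a j)"
      using True by (metis Diff_partition Int_Diff_disjoint finite_lessThan fin sum.subset_diff)
    then have e: "(\<Sum>j<n. c j * a j) * z T = (\<Sum>j\<in>{..<n} - T. c j * a j * z T) + (\<Sum>j\<in>T. c j * a j * z T)"
      by (simp add: distrib_right sum_distrib_right)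
    have "(\<Sum>j\<in>{..<n} - T. a j * c j * z T) = (\<Sum>j\<in>{..<n} - T. c j * a j * z T)"
      by (simp add: mult.commute)
    then show ?thesis unfolding e by simp
  qed
  show ?thesis unfolding A B sum.distrib using cross diag
    by (simp add: algebra_simps)
qed

section \<open>Ideals\<close>

lemma ideal_0: "is_ideal J \<Longrightarrow> 0 \<in> J" by (simp add: is_ideal_def)
lemma ideal_add: "is_ideal J \<Longrightarrow> x \<in> J \<Longrightarrow> y \<in> J \<Longrightarrow> x + y \<in> J" by (simp add: is_ideal_def)
lemma ideal_mult_left: "is_ideal J \<Longrightarrow> x \<in> J \<Longrightarrow> r * x \<in> J" by (simp add: is_ideal_def)
lemma ideal_mult_right: "is_ideal J \<Longrightarrow> x \<in> J \<Longrightarrow> x * r \<in> J"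
  by (metis ideal_mult_left mult.commute)
lemma ideal_uminus: "is_ideal J \<Longrightarrow> x \<in> J \<Longrightarrow> - x \<in> J"
  by (metis ideal_mult_left mult_minus1)
lemma ideal_diff: "is_ideal J \<Longrightarrow> x \<in> J \<Longrightarrow> y \<in> J \<Longrightarrow> x - y \<in> J"
  by (metis ideal_add ideal_uminus diff_conv_add_uminus)
lemma ideal_sum: "is_ideal J \<Longrightarrow> (\<And>x. x \<in> A \<Longrightarrow> g x \<in> J) \<Longrightarrow> sum g A \<in> J"
proof (induction A rule: infinite_finite_induct)
  case (infinite A) then show ?case by (simp add: ideal_0)
next
  case empty then show ?case by (simp add: ideal_0)
next
  case (insert x F) then show ?case by (simp add: ideal_add)
qed
lemma ideal_one: "is_ideal J \<Longrightarrow> 1 \<in> J \<Longrightarrow> J = UNIV"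
  by (metis UNIV_eq_I ideal_mult_left mult.right_neutral)
lemma ideal_diff_cancel: "is_ideal J \<Longrightarrow> x - y \<in> J \<Longrightarrow> y \<in> J \<Longrightarrow> x \<in> J"
  by (metis diff_add_cancel ideal_add)

lemma ideal_gen_ideal: "is_ideal (ideal_gen h k)"
  unfolding is_ideal_def ideal_gen_def
proof (intro conjI ballI allI)
  show "0 \<in> {\<Sum>j<k. r j * h j |r. True}" by (rule CollectI, rule exI[of _ "\<lambda>_. 0"]) simp
next
  fix x y assume "x \<in> {\<Sum>j<k. r j * h j |r. True}" "y \<in> {\<Sum>j<k. r j * h j |r. True}"
  then obtain r s where "x = (\<Sum>j<k. r j * h j)" "y = (\<Sum>j<k. s j * h j)" by auto
  then have "x + y = (\<Sum>j<k. (r j + s j) * h j)" by (simp add: sum.distrib distrib_right)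
  then show "x + y \<in> {\<Sum>j<k. r j * h j |r. True}" by (intro CollectI exI[of _ "\<lambda>j. r j + s j"]) simp
next
  fix c x assume "x \<in> {\<Sum>j<k. r j * h j |r. True}"
  then obtain r where "x = (\<Sum>j<k. r j * h j)" by auto
  then have "c * x = (\<Sum>j<k. (c * r j) * h j)" by (simp add: sum_distrib_left mult.assoc)
  then show "c * x \<in> {\<Sum>j<k. r j * h j |r. True}" by (intro CollectI exI[of _ "\<lambda>j. c * r j"]) simp
qed

lemma ideal_gen_mem: "j < k \<Longrightarrow> h j \<in> ideal_gen h k"
proof -
  assume j: "j < k"
  have "(\<Sum>i<k. (if i = j then 1 else 0) * h i) = (\<Sum>i<k. if i = j then h i else 0)"
    by (intro sum.cong) auto
  also have "\<dots> = h j" using j by (simp add: sum.delta)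
  finally have "h j = (\<Sum>i<k. (if i = j then 1 else 0) * h i)" ..
  then show ?thesis unfolding ideal_gen_def by (intro CollectI exI[of _ "\<lambda>i. if i = j then 1 else 0"]) simp
qed

lemma ideal_gen_0: "ideal_gen h 0 = {0}"
  unfolding ideal_gen_def by simp

definition addgen :: "'a::comm_ring_1 set \<Rightarrow> 'a \<Rightarrow> 'a set" where
  "addgen J y = {j + r * y | j r. j \<in> J}"

lemma ideal_gen_Suc: "ideal_gen h (Suc k) = addgen (ideal_gen h k) (h k)"
proof (intro set_eqI iffI)
  fix x assume "x \<in> ideal_gen h (Suc k)"
  then obtain r where "x = (\<Sum>j<Suc k. r j * h j)" unfolding ideal_gen_def by auto
  then have "x = (\<Sum>j<k. r j * h j) + r k * h k" by simp
  then show "x \<in> addgen (ideal_gen h k) (h k)" unfolding addgen_def ideal_gen_def by blast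
next
  fix x assume "x \<in> addgen (ideal_gen h k) (h k)"
  then obtain r c where x: "x = (\<Sum>j<k. r j * h j) + c * h k" unfolding addgen_def ideal_gen_def by auto
  define r' where "r' = r(k := c)"
  have "(\<Sum>j<k. r j * h j) = (\<Sum>j<k. r' j * h j)" unfolding r'_def by (intro sum.cong) auto
  then have "x = (\<Sum>j<Suc k. r' j * h j)" using x unfolding r'_def by simp
  then show "x \<in> ideal_gen h (Suc k)" unfolding ideal_gen_def by blast
qed

lemma addgen_ideal: "is_ideal J \<Longrightarrow> is_ideal (addgen J y)"
  unfolding is_ideal_def addgen_def
proof (intro conjI ballI allI; (elim conjE)?)
  assume J: "0 \<in> J" "\<forall>x\<in>J. \<forall>y\<in>J. x + y \<in> J" "\<forall>r. \<forall>x\<in>J. r * x \<in> J"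
  show "0 \<in> {j + r * y |j r. j \<in> J}" using J by (metis (mono_tags, lifting) CollectI add_0 mult_zero_left)
  fix a b assume "a \<in> {j + r * y |j r. j \<in> J}" "b \<in> {j + r * y |j r. j \<in> J}"
  then obtain j r j' r' where "a = j + r * y" "b = j' + r' * y" "j \<in> J" "j' \<in> J" by auto
  then have "a + b = (j + j') + (r + r') * y" "j + j' \<in> J" using J by (auto simp: algebra_simps)
  then show "a + b \<in> {j + r * y |j r. j \<in> J}" by blast
next
  fix c a assume J: "0 \<in> J" "\<forall>x\<in>J. \<forall>y\<in>J. x + y \<in> J" "\<forall>r. \<forall>x\<in>J. r * x \<in> J"
    and "a \<in> {j + r * y |j r. j \<in> J}"
  then obtain j r where "a = j + r * y" "j \<in> J" by auto
  then have "c * a = c * j + (c * r) * y" "c * j \<in> J" using J by (auto simp: algebra_simps)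
  then show "c * a \<in> {j + r * y |j r. j \<in> J}" by blast
qed

lemma addgen_sub: "is_ideal J \<Longrightarrow> J \<subseteq> addgen J y"
  unfolding addgen_def by (force intro: exI[of _ 0])

lemma addgen_mem: "is_ideal J \<Longrightarrow> j \<in> J \<Longrightarrow> j + r * y \<in> addgen J y"
  unfolding addgen_def by blast

definition reg :: "'a::comm_ring_1 set \<Rightarrow> 'a \<Rightarrow> bool" where
  "reg J y \<longleftrightarrow> (\<forall>r. r * y \<in> J \<longrightarrow> r \<in> J)"

lemma extI: "(\<And>S. x S \<noteq> 0 \<Longrightarrow> S \<subseteq> {..<n} \<and> card S = i) \<Longrightarrow> x \<in> ext n i"
  unfolding ext_def by blast
lemma extD: "x \<in> ext n i \<Longrightarrow> x S \<noteq> 0 \<Longrightarrow> S \<subseteq> {..<n} \<and> card S = i"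
  unfolding ext_def by blast
lemma extD0: "x \<in> ext n i \<Longrightarrow> \<not> (S \<subseteq> {..<n} \<and> card S = i) \<Longrightarrow> x S = 0"
  unfolding ext_def by blast

lemma ext_zero[simp]: "0 \<in> ext n i" by (simp add: ext_def)
lemma ext_zero'[simp]: "(\<lambda>_. 0) \<in> ext n i" by (simp add: ext_def)
lemma ext_add: fixes x y :: "nat set \<Rightarrow> 'b::comm_ring_1" assumes "x \<in> ext n i" "y \<in> ext n i" shows "x + y \<in> ext n i"
proof (rule extI)
  fix S assume "(x + y) S \<noteq> 0"
  then have "x S \<noteq> 0 \<or> y S \<noteq> 0" by auto
  then show "S \<subseteq> {..<n} \<and> card S = i" using extD assms by blast
qed
lemma ext_diff: fixes x y :: "nat set \<Rightarrow> 'b::comm_ring_1" assumes "x \<in> ext n i" "y \<in> ext n i" shows "x - y \<in> ext n i"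
proof (rule extI)
  fix S assume "(x - y) S \<noteq> 0"
  then have "x S \<noteq> 0 \<or> y S \<noteq> 0" by auto
  then show "S \<subseteq> {..<n} \<and> card S = i" using extD assms by blast
qed
lemma ext_uminus: fixes x :: "nat set \<Rightarrow> 'b::comm_ring_1" assumes "x \<in> ext n i" shows "- x \<in> ext n i"
proof (rule extI)
  fix S assume "(- x) S \<noteq> 0"
  then have "x S \<noteq> 0" by auto
  then show "S \<subseteq> {..<n} \<and> card S = i" using extD assms by blast
qed
lemma ext_smult: fixes x :: "nat set \<Rightarrow> 'b::comm_ring_1" assumes "x \<in> ext n i" shows "(\<lambda>T. x T * r) \<in> ext n i"
proof (rule extI)
  fix S assume "x S * r \<noteq> 0"
  then have "x S \<noteq> 0" by auto
  then show "S \<subseteq> {..<n} \<and> card S = i" using extD assms by blast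
qed

lemma ext_big: assumes "x \<in> ext n i" "n < i" shows "x = 0"
proof
  fix S show "x S = 0 S"
  proof (rule ccontr)
    assume "x S \<noteq> 0 S"
    then have "S \<subseteq> {..<n}" "card S = i" using extD[OF assms(1)] by auto
    then have "card S \<le> n" by (metis card_lessThan card_mono finite_lessThan)
    then show False using assms(2) \<open>card S = i\<close> by simp
  qed
qed

lemma ext_supp: "x \<in> ext n i \<Longrightarrow> x S \<noteq> 0 \<Longrightarrow> S \<subseteq> {..<n}"
  using extD by blast

lemma kos_ext: assumes "x \<in> ext n (Suc i)" shows "kos n a x \<in> ext n i"
proof (rule extI)
  fix S assume "kos n a x S \<noteq> 0"
  then have S: "S \<subseteq> {..<n}" and "(\<Sum>j\<in>{..<n} - S. (-1) ^ card {t\<in>S. t < j} * a j * x (insert j S)) \<noteq> 0"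
    unfolding kos_def by (auto split: if_splits)
  then obtain j where j: "j \<in> {..<n} - S" "x (insert j S) \<noteq> 0" by (metis (no_types, lifting) mult_zero_right sum.neutral)
  then have "card (insert j S) = Suc i" using extD[OF assms] by blast
  moreover have "finite S" using S finite_subset by blast
  ultimately have "card S = i" using j by simp
  then show "S \<subseteq> {..<n} \<and> card S = i" using S by simp
qed

lemma kos_ext0: assumes "x \<in> ext n 0" shows "kos n a x = 0"
proof
  fix S
  have "x (insert j S) = 0" for j
  proof (rule extD0[OF assms])
    show "\<not> (insert j S \<subseteq> {..<n} \<and> card (insert j S) = 0)"
      by (metis card_0_eq finite_lessThan finite_subset insert_not_empty)
  qed
  then show "kos n a x S = 0 S" unfolding kos_def by simp
qed

lemma kos_ext': "x \<in> ext n i \<Longrightarrow> kos n a x \<in> ext n (i - 1)"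
  by (cases i) (auto simp: kos_ext0 kos_ext)

lemma kos_add: "kos n a (x + y) = kos n a x + kos n a y"
  unfolding kos_def by (auto simp: sum.distrib algebra_simps)
lemma kos_add': "kos n a (\<lambda>T. x T + y T) = (\<lambda>T. kos n a x T + kos n a y T)"
  unfolding kos_def by (auto simp: sum.distrib algebra_simps)
lemma kos_diff: "kos n a (x - y) = kos n a x - kos n a y"
  unfolding kos_def by (auto simp: sum_subtractf algebra_simps)
lemma kos_diff': "kos n a (\<lambda>T. x T - y T) = (\<lambda>T. kos n a x T - kos n a y T)"
  unfolding kos_def by (auto simp: sum_subtractf algebra_simps)
lemma kos_uminus: "kos n a (- x) = - kos n a x"
  unfolding kos_def by (auto simp: sum_negf algebra_simps)
lemma kos_zero[simp]: "kos n a 0 = 0"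
  unfolding kos_def by (auto simp: fun_eq_iff)
lemma kos_zero'[simp]: "kos n a (\<lambda>_. 0) = 0"
  unfolding kos_def by (auto simp: fun_eq_iff)
lemma kos_smult: "kos n a (\<lambda>T. x T * r) = (\<lambda>T. kos n a x T * r)"
  unfolding kos_def by (auto simp: fun_eq_iff sum_distrib_right mult.assoc)

lemma kos_ideal: "is_ideal J \<Longrightarrow> (\<And>T. x T \<in> J) \<Longrightarrow> kos n a x T \<in> J"
  unfolding kos_def by (auto intro!: ideal_sum ideal_mult_left simp: ideal_0)

lemma wedge_ideal: "is_ideal J \<Longrightarrow> (\<And>T. x T \<in> J) \<Longrightarrow> wedge n c x T \<in> J"
  unfolding wedge_def by (auto intro!: ideal_sum ideal_mult_left simp: ideal_0)

lemma wedge_ext: assumes "x \<in> ext n i" shows "wedge n c x \<in> ext n (Suc i)"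
proof (rule extI)
  fix S assume "wedge n c x S \<noteq> 0"
  then have S: "S \<subseteq> {..<n}" and "(\<Sum>k\<in>S. sg S k * c k * x (S - {k})) \<noteq> 0"
    unfolding wedge_def by (auto split: if_splits)
  then obtain k where k: "k \<in> S" "x (S - {k}) \<noteq> 0" by (metis (no_types, lifting) mult_zero_right sum.neutral)
  then have "card (S - {k}) = i" using extD[OF assms] by blast
  moreover have "finite S" using S finite_subset by blast
  ultimately have "card S = Suc i" using k
    by (metis card_Diff1_le card_Suc_Diff1 )
  then show "S \<subseteq> {..<n} \<and> card S = Suc i" using S by simp
qed

section \<open>Koszul homology vanishing, mod an ideal\<close>

definition KV :: "nat \<Rightarrow> (nat \<Rightarrow> 'a::comm_ring_1) \<Rightarrow> 'a set \<Rightarrow> nat \<Rightarrow> bool" where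
  "KV n a J i \<longleftrightarrow> (\<forall>z\<in>ext n i. (\<forall>T. kos n a z T \<in> J) \<longrightarrow>
     (\<exists>w\<in>ext n (Suc i). \<forall>T. z T - kos n a w T \<in> J))"

lemma KV_big: "is_ideal J \<Longrightarrow> n < i \<Longrightarrow> KV n a J i"
  unfolding KV_def using ext_big by (fastforce simp: ideal_0 intro!: bexI[of _ 0])

lemma choose_mod:
  assumes J: "is_ideal J" and x: "x \<in> ext n i" and mem: "\<And>T. x T \<in> addgen J y"
  shows "\<exists>v\<in>ext n i. \<forall>T. x T - v T * y \<in> J"
proof -
  define v where "v T = (if T \<subseteq> {..<n} \<and> card T = i then (SOME r. x T - r * y \<in> J) else 0)" for T
  have "x T - v T * y \<in> J" for T
  proof (cases "T \<subseteq> {..<n} \<and> card T = i")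
    case True
    obtain j r where "x T = j + r * y" "j \<in> J" using mem[of T] unfolding addgen_def by blast
    then have ex: "\<exists>r. x T - r * y \<in> J" by (intro exI[of _ r]) simp
    show ?thesis using True someI_ex[OF ex] unfolding v_def by simp
  next
    case False
    have "v T = 0" unfolding v_def by (rule if_not_P[OF False])
    then show ?thesis using extD0[OF x False] J by (simp add: ideal_0)
  qed
  moreover have "v \<in> ext n i" unfolding v_def by (rule extI) (auto split: if_splits)
  ultimately show ?thesis by blast
qed

lemma KV_step1:
  assumes J: "is_ideal J" and y: "y \<in> ideal_gen a n" and r: "reg J y"
    and KV: "KV n a (addgen J y) (Suc i)"
  shows "KV n a J i"
  unfolding KV_def
proof (intro ballI impI)
  fix z assume z: "z \<in> ext n i" and cyc: "\<forall>T. kos n a z T \<in> J"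
  obtain c where yc: "y = (\<Sum>j<n. c j * a j)" using y unfolding ideal_gen_def by auto
  define w where "w = wedge n c z"
  have wext: "w \<in> ext n (Suc i)" unfolding w_def by (rule wedge_ext[OF z])
  have hom: "kos n a w T + wedge n c (kos n a z) T = y * z T" for T
    unfolding w_def yc by (rule homotopy) (use ext_supp[OF z] in blast)
  have wJ: "wedge n c (kos n a z) T \<in> J" for T using wedge_ideal[OF J] cyc by blast
  have "kos n a w T \<in> addgen J y" for T
  proof -
    have "kos n a w T = - wedge n c (kos n a z) T + z T * y" using hom[of T] by (simp add: algebra_simps)
    then show ?thesis using addgen_mem[OF J ideal_uminus[OF J wJ]] by simp
  qed
  then obtain u where u: "u \<in> ext n (Suc (Suc i))" and wu: "\<forall>T. w T - kos n a u T \<in> addgen J y"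
    using KV wext unfolding KV_def by blast
  have kuext: "kos n a u \<in> ext n (Suc i)" by (rule kos_ext[OF u])
  have dext: "(\<lambda>T. w T - kos n a u T) \<in> ext n (Suc i)"
    using ext_diff[OF wext kuext] by (simp add: fun_diff_def)
  obtain v where v: "v \<in> ext n (Suc i)" and vj: "\<forall>T. (w T - kos n a u T) - v T * y \<in> J"
    using choose_mod[OF J dext, of y] wu by auto
  define jf where "jf T = (w T - kos n a u T) - v T * y" for T
  have jfJ: "jf T \<in> J" for T using vj unfolding jf_def by blast
  have wdec: "w = (\<lambda>T. kos n a u T + jf T + v T * y)" unfolding jf_def by auto
  have "kos n a w = (\<lambda>T. kos n a (kos n a u) T + kos n a jf T + kos n a v T * y)"
    unfolding wdec by (simp add: kos_add' kos_smult)
  then have kw: "kos n a w T = kos n a jf T + kos n a v T * y" for T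
    by (simp add: kos_kos_zero)
  have "(z T - kos n a v T) * y \<in> J" for T
  proof -
    have "(z T - kos n a v T) * y = wedge n c (kos n a z) T + kos n a jf T"
      using hom[of T] kw[of T] by (simp add: algebra_simps)
    then show ?thesis using wJ kos_ideal[OF J jfJ] ideal_add[OF J] by simp
  qed
  then have "z T - kos n a v T \<in> J" for T using r unfolding reg_def by blast
  then show "\<exists>w\<in>ext n (Suc i). \<forall>T. z T - kos n a w T \<in> J" using v by blast
qed

lemma KV_step2:
  assumes J: "is_ideal J" and r: "reg J y"
    and KVi: "KV n a J i" and KVi1: "i = 0 \<or> KV n a J (i - 1)"
  shows "KV n a (addgen J y) i"
  unfolding KV_def
proof (intro ballI impI)
  fix w assume w: "w \<in> ext n i" and cyc: "\<forall>T. kos n a w T \<in> addgen J y"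
  show "\<exists>t\<in>ext n (Suc i). \<forall>T. w T - kos n a t T \<in> addgen J y"
  proof (cases i)
    case 0
    then have "kos n a w = 0" using kos_ext0 w by blast
    then obtain t where "t \<in> ext n (Suc i)" "\<forall>T. w T - kos n a t T \<in> J"
      using KVi w J unfolding KV_def by (auto simp: ideal_0)
    then show ?thesis using addgen_sub[OF J] by blast
  next
    case (Suc i')
    have KVi': "KV n a J i'" using KVi1 Suc by simp
    have kwext: "kos n a w \<in> ext n i'" using kos_ext w Suc by blast
    obtain v where v: "v \<in> ext n i'" and vj: "\<forall>T. kos n a w T - v T * y \<in> J"
      using choose_mod[OF J kwext] cyc by blast
    define jf where "jf T = kos n a w T - v T * y" for T
    have jfJ: "jf T \<in> J" for T using vj unfolding jf_def by blast
    have kw: "kos n a w = (\<lambda>T. jf T + v T * y)" unfolding jf_def by auto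
    have "kos n a (\<lambda>T. jf T + v T * y) = 0" using kos_kos_zero[of n a w] unfolding kw .
    then have eq: "kos n a jf T + kos n a v T * y = 0" for T
      by (simp add: kos_add' kos_smult fun_eq_iff)
    have "kos n a v T * y = - kos n a jf T" for T
      using eq[of T] by (simp add: eq_neg_iff_add_eq_0 add.commute)
    then have "kos n a v T * y \<in> J" for T
      using ideal_uminus[OF J kos_ideal[OF J jfJ]] by simp
    then have "kos n a v T \<in> J" for T using r unfolding reg_def by blast
    then obtain u where u: "u \<in> ext n (Suc i')" and vu: "\<forall>T. v T - kos n a u T \<in> J"
      using KVi' v unfolding KV_def by blast
    define w' where "w' T = w T - u T * y" for T
    have w'ext: "w' \<in> ext n i" unfolding w'_def using ext_diff[OF w ext_smult[OF u[folded Suc]]]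
      by (simp add: fun_diff_def)
    have "kos n a w' T = jf T + (v T - kos n a u T) * y" for T
    proof -
      have "kos n a w' = (\<lambda>T. kos n a w T - kos n a u T * y)"
        unfolding w'_def kos_diff' kos_smult ..
      then show ?thesis unfolding jf_def by (simp add: algebra_simps)
    qed
    then have "kos n a w' T \<in> J" for T
      using ideal_add[OF J jfJ ideal_mult_right[OF J]] vu by simp
    then obtain t where t: "t \<in> ext n (Suc i)" and w't: "\<forall>T. w' T - kos n a t T \<in> J"
      using KVi w'ext unfolding KV_def by blast
    have "w T - kos n a t T \<in> addgen J y" for T
    proof -
      have e: "w T - kos n a t T = (w' T - kos n a t T) + u T * y" unfolding w'_def by simp
      have "(w' T - kos n a t T) + u T * y \<in> addgen J y" by (rule addgen_mem[OF J]) (use w't in blast)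
      then show ?thesis unfolding e .
    qed
    then show ?thesis using t by blast
  qed
qed

definition regseq :: "(nat \<Rightarrow> 'a::comm_ring_1) \<Rightarrow> nat \<Rightarrow> bool" where
  "regseq x k \<longleftrightarrow> (\<forall>i<k. reg (ideal_gen x i) (x i))"

lemma KV_regseq_in:
  assumes rs: "regseq x t" and xin: "\<And>i. i < t \<Longrightarrow> x i \<in> ideal_gen a n"
  shows "n < i + t \<Longrightarrow> KV n a {0} i"
proof -
  have main: "\<forall>j i. j + m = t \<longrightarrow> n < i + m \<longrightarrow> KV n a (ideal_gen x j) i" for m
  proof (induction m)
    case 0
    show ?case
    proof (intro allI impI)
      fix j i assume "j + 0 = t" "n < i + 0"
      then show "KV n a (ideal_gen x j) i" using KV_big[OF ideal_gen_ideal] by simp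
    qed
  next
    case (Suc m)
    show ?case
    proof (intro allI impI)
      fix j i assume j: "j + Suc m = t" and i: "n < i + Suc m"
      have "Suc j + m = t" "n < Suc i + m" using j i by simp_all
      then have "KV n a (ideal_gen x (Suc j)) (Suc i)" using Suc.IH by blast
      then have k1: "KV n a (addgen (ideal_gen x j) (x j)) (Suc i)" by (simp add: ideal_gen_Suc)
      have k2: "reg (ideal_gen x j) (x j)" using rs j unfolding regseq_def by auto
      have k3: "x j \<in> ideal_gen a n" using xin j by auto
      show "KV n a (ideal_gen x j) i"
        by (rule KV_step1[OF ideal_gen_ideal k3 k2 k1])
    qed
  qed
  assume "n < i + t"
  then show ?thesis using main[of t] by (simp add: ideal_gen_0)
qed

lemma KV_regseq_quot:
  assumes rs: "regseq x j0" and KV0: "\<And>i. n < i + d \<Longrightarrow> KV n a {0} i"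
  shows "j \<le> j0 \<Longrightarrow> n + j < i + d \<Longrightarrow> KV n a (ideal_gen x j) i"
proof (induction j arbitrary: i)
  case 0
  then show ?case using KV0 by (simp add: ideal_gen_0)
next
  case (Suc j)
  have r: "reg (ideal_gen x j) (x j)" using rs Suc.prems unfolding regseq_def by auto
  have a: "KV n a (ideal_gen x j) i" using Suc by simp
  have b: "i = 0 \<or> KV n a (ideal_gen x j) (i - 1)" using Suc by (cases i) auto
  show ?case using KV_step2[OF ideal_gen_ideal r a b] by (simp add: ideal_gen_Suc)
qed

lemma kos_in_gen: "kos n a w T \<in> ideal_gen a n"
proof -
  have I: "is_ideal (ideal_gen a n)" by (rule ideal_gen_ideal)
  have t: "(-1) ^ card {t\<in>T. t < j} * a j * w (insert j T) \<in> ideal_gen a n" if "j < n" for j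
  proof -
    have e: "(-1) ^ card {t\<in>T. t < j} * a j * w (insert j T) = ((-1) ^ card {t\<in>T. t < j} * w (insert j T)) * a j"
      by (simp add: ac_simps)
    show ?thesis unfolding e by (rule ideal_mult_left[OF I ideal_gen_mem[OF that]])
  qed
  show ?thesis unfolding kos_def
    by (simp add: ideal_0[OF I]) (intro impI ideal_sum[OF I] t, simp)
qed

lemma KV_top:
  assumes J: "is_ideal J" and KV: "KV n a J n" and r: "\<And>j. j < n \<Longrightarrow> r * a j \<in> J"
  shows "r \<in> J"
proof -
  define z where "z S = (if S = {..<n} then r else 0)" for S
  have zext: "z \<in> ext n n" unfolding z_def by (rule extI) (auto split: if_splits)
  have t: "(-1) ^ card {t\<in>T. t < j} * a j * z (insert j T) \<in> J" if "j < n" for j T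
  proof (cases "insert j T = {..<n}")
    case True
    have "(-1) ^ card {t\<in>T. t < j} * a j * z (insert j T) = (-1) ^ card {t\<in>T. t < j} * (r * a j)"
      using True unfolding z_def by (simp add: ac_simps)
    then show ?thesis using ideal_mult_left[OF J r[OF that]] by simp
  next
    case False
    then show ?thesis unfolding z_def by (simp add: ideal_0[OF J])
  qed
  have "kos n a z T \<in> J" for T
    unfolding kos_def by (simp add: ideal_0[OF J]) (intro impI ideal_sum[OF J] t, simp)
  then obtain w where w: "w \<in> ext n (Suc n)" and zw: "\<forall>T. z T - kos n a w T \<in> J"
    using KV zext unfolding KV_def by blast
  have "w = 0" using ext_big[OF w] by simp
  then have "z {..<n} \<in> J" using zw[rule_format, of "{..<n}"] by simp
  then show ?thesis unfolding z_def by simp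
qed

lemma KV_bottom:
  assumes KV: "KV n a {0} 0"
  shows "1 \<in> ideal_gen a n"
proof -
  define z where "z S = (if S = {} then 1 else (0::'a))" for S :: "nat set"
  have zext: "z \<in> ext n 0" unfolding z_def by (rule extI) (auto split: if_splits)
  have "kos n a z = 0" by (rule kos_ext0[OF zext])
  then have "\<forall>T. kos n a z T \<in> {0}" by simp
  then obtain w where "\<forall>T. z T - kos n a w T \<in> {0}"
    using KV zext unfolding KV_def by blast
  then have "z {} = kos n a w {}" by auto
  then show ?thesis using kos_in_gen[of n a w "{}"] unfolding z_def by simp
qed

definition colon :: "'a::comm_ring_1 set \<Rightarrow> 'a \<Rightarrow> 'a set" where
  "colon K a = {r. r * a \<in> K}"

definition is_ass :: "'a::comm_ring_1 set \<Rightarrow> 'a set \<Rightarrow> bool" where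
  "is_ass K P \<longleftrightarrow> is_prime_ideal P \<and> (\<exists>a. a \<notin> K \<and> P = colon K a)"

lemma colon_ideal: assumes K: "is_ideal K" shows "is_ideal (colon K a)"
  unfolding is_ideal_def colon_def
  using ideal_0[OF K] ideal_add[OF K] ideal_mult_left[OF K]
  by (auto simp: distrib_right mult.assoc)

lemma ideal_gen_least:
  assumes K: "is_ideal K" and h: "\<And>j. j < k \<Longrightarrow> h j \<in> K"
  shows "ideal_gen h k \<subseteq> K"
proof
  fix x assume "x \<in> ideal_gen h k"
  then obtain r where "x = (\<Sum>j<k. r j * h j)" unfolding ideal_gen_def by auto
  then show "x \<in> K" using h by (auto intro!: ideal_sum[OF K] ideal_mult_left[OF K])
qed

definition ideal_gt :: "('a::comm_ring_1 set \<times> 'a set) set" where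
  "ideal_gt = {(A, B). is_ideal A \<and> is_ideal B \<and> B \<subset> A}"

lemma chain_union_ideal:
  assumes ch: "\<And>i. is_ideal (f i)" and mono: "\<And>i. f i \<subseteq> f (Suc i)"
  shows "is_ideal (\<Union>i. f i)"
proof -
  have le: "i \<le> j \<Longrightarrow> f i \<subseteq> f j" for i j
    using mono by (rule lift_Suc_mono_le)
  show ?thesis unfolding is_ideal_def
  proof (intro conjI ballI allI)
    show "0 \<in> (\<Union>i. f i)" using ideal_0[OF ch] by blast
  next
    fix x y assume "x \<in> (\<Union>i. f i)" "y \<in> (\<Union>i. f i)"
    then obtain i j where "x \<in> f i" "y \<in> f j" by auto
    moreover have "f i \<subseteq> f (max i j)" "f j \<subseteq> f (max i j)" by (simp_all add: le)
    ultimately have "x \<in> f (max i j)" "y \<in> f (max i j)" by blast+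
    then show "x + y \<in> (\<Union>i. f i)" using ideal_add[OF ch] by blast
  next
    fix r x assume "x \<in> (\<Union>i. f i)"
    then show "r * x \<in> (\<Union>i. f i)" using ideal_mult_left[OF ch] by blast
  qed
qed

lemma noeth_wf:
  assumes N: "noetherian_ring TYPE('a::comm_ring_1)"
  shows "wf (ideal_gt :: ('a set \<times> 'a set) set)"
proof (rule ccontr)
  assume "\<not> wf (ideal_gt :: ('a set \<times> 'a set) set)"
  then obtain f :: "nat \<Rightarrow> 'a set" where f: "\<And>i. (f (Suc i), f i) \<in> ideal_gt"
    unfolding wf_iff_no_infinite_down_chain by blast
  have ch: "is_ideal (f i)" for i using f[of i] unfolding ideal_gt_def by auto
  have mono: "f i \<subset> f (Suc i)" for i using f[of i] unfolding ideal_gt_def by auto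
  have mono': "\<And>i. f i \<subseteq> f (Suc i)" using mono by blast
  have le: "i \<le> j \<Longrightarrow> f i \<subseteq> f j" for i j
    by (rule lift_Suc_mono_le[of f, OF mono'])
  define U where "U = (\<Union>i. f i)"
  have U: "is_ideal U" unfolding U_def by (rule chain_union_ideal[of f, OF ch mono'])
  have "\<forall>I::'a set. is_ideal I \<longrightarrow> (\<exists>h k. I = ideal_gen h k)"
    using N by (simp add: noetherian_ring_def)
  then have "\<exists>h k. U = ideal_gen h k" using U by blast
  then obtain h k where hk: "U = ideal_gen h k" by blast
  have "\<forall>j. \<exists>i. j < k \<longrightarrow> h j \<in> f i"
  proof
    fix j show "\<exists>i. j < k \<longrightarrow> h j \<in> f i"
    proof (cases "j < k")
      case True
      then have "h j \<in> U" using ideal_gen_mem[of j k h] hk by simp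
      then show ?thesis unfolding U_def by blast
    qed simp
  qed
  from choice[OF this] obtain ii where ii0: "\<forall>j. j < k \<longrightarrow> h j \<in> f (ii j)" by blast
  then have ii: "\<And>j. j < k \<Longrightarrow> h j \<in> f (ii j)" by blast
  define N where "N = (\<Sum>j<k. ii j)"
  have "h j \<in> f N" if "j < k" for j
  proof -
    have "ii j \<le> N" unfolding N_def using that by (intro member_le_sum) auto
    then show ?thesis using le[of "ii j" N] ii[OF that] by blast
  qed
  then have "U \<subseteq> f N" unfolding hk by (rule ideal_gen_least[OF ch])
  moreover have "f (Suc N) \<subseteq> U" unfolding U_def by blast
  ultimately show False using mono[of N] by blast
qed

lemma noeth_max:
  assumes N: "noetherian_ring TYPE('a::comm_ring_1)"
    and S: "A \<in> S" and id: "\<And>B. B \<in> S \<Longrightarrow> is_ideal B"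
  shows "\<exists>M\<in>(S :: 'a set set). \<forall>B\<in>S. M \<subseteq> B \<longrightarrow> B = M"
proof -
  obtain M where M: "M \<in> S" and min: "\<And>B. (B, M) \<in> ideal_gt \<Longrightarrow> B \<notin> S"
    using wfE_min[OF noeth_wf[OF N] S] by metis
  show ?thesis
  proof (intro bexI[OF _ M] ballI impI)
    fix B assume "B \<in> S" "M \<subseteq> B"
    then show "B = M" using min[of B] id M unfolding ideal_gt_def by blast
  qed
qed

lemma ass_exists:
  assumes N: "noetherian_ring TYPE('a::comm_ring_1)" and K: "is_ideal K" and a: "(a::'a) \<notin> K"
  shows "\<exists>P. is_ass K P \<and> colon K a \<subseteq> P"
proof -
  define S where "S = {colon K b | b. b \<notin> K \<and> colon K a \<subseteq> colon K b}"
  have aS: "colon K a \<in> S" unfolding S_def using a by blast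
  have idS: "\<And>B. B \<in> S \<Longrightarrow> is_ideal B" using colon_ideal[OF K] unfolding S_def by blast
  obtain M where M: "M \<in> S" and max0: "\<forall>B\<in>S. M \<subseteq> B \<longrightarrow> B = M"
    using noeth_max[OF N aS idS] by blast
  have max: "\<And>B. B \<in> S \<Longrightarrow> M \<subseteq> B \<Longrightarrow> B = M" using max0 by blast
  obtain b where b: "b \<notin> K" "colon K a \<subseteq> colon K b" "M = colon K b" using M unfolding S_def by blast
  have prime: "is_prime_ideal M"
    unfolding is_prime_ideal_def
  proof (intro conjI allI impI)
    show "is_ideal M" using b colon_ideal[OF K] by simp
    show "M \<noteq> UNIV"
    proof
      assume "M = UNIV"
      then have "1 \<in> colon K b" using b by simp
      then show False using b unfolding colon_def by simp
    qed
  next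
    fix r s assume rs: "r * s \<in> M"
    show "r \<in> M \<or> s \<in> M"
    proof (cases "r \<in> M")
      case True then show ?thesis by simp
    next
      case False
      then have r: "r \<notin> M" .
      then have rb: "r * b \<notin> K" using b unfolding colon_def by simp
      have sub: "M \<subseteq> colon K (r * b)"
      proof
        fix s assume "s \<in> M"
        then have "s * b \<in> K" using b unfolding colon_def by simp
        then have "r * (s * b) \<in> K" by (rule ideal_mult_left[OF K])
        then show "s \<in> colon K (r * b)" unfolding colon_def by (simp add: ac_simps)
      qed
      have "colon K a \<subseteq> colon K (r * b)" using b sub by blast
      then have "colon K (r * b) \<in> S" unfolding S_def using rb by blast
      then have "colon K (r * b) = M" using max sub by blast
      moreover have "s \<in> colon K (r * b)" using rs b unfolding colon_def by (simp add: ac_simps)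
      ultimately show ?thesis by simp
    qed
  qed
  show ?thesis unfolding is_ass_def using prime b by blast
qed

lemma colon_mult_prime:
  assumes K: "is_ideal K" and P: "is_prime_ideal P" and Pc: "P = colon K c" and r: "r \<notin> P"
  shows "colon K (r * c) = P"
proof
  show "colon K (r * c) \<subseteq> P"
  proof
    fix s assume "s \<in> colon K (r * c)"
    then have "(s * r) \<in> P" unfolding Pc colon_def by (simp add: ac_simps)
    then show "s \<in> P" using P r unfolding is_prime_ideal_def by blast
  qed
next
  show "P \<subseteq> colon K (r * c)"
  proof
    fix s assume "s \<in> P"
    then have "s * c \<in> K" unfolding Pc colon_def by simp
    then have "r * (s * c) \<in> K" by (rule ideal_mult_left[OF K])
    then show "s \<in> colon K (r * c)" unfolding colon_def by (simp add: ac_simps)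
  qed
qed

lemma colon_add_mem:
  assumes K: "is_ideal K" and k: "k \<in> K"
  shows "colon K (k + x) = colon K x"
proof -
  have "t * (k + x) \<in> K \<longleftrightarrow> t * x \<in> K" for t
  proof -
    have tk: "t * k \<in> K" by (rule ideal_mult_left[OF K k])
    have "t * (k + x) = t * k + t * x" by (simp add: algebra_simps)
    then show ?thesis using tk ideal_add[OF K] ideal_diff[OF K]
      by (metis add_diff_cancel_left')
  qed
  then show ?thesis unfolding colon_def by blast
qed

lemma ass_step:
  assumes K: "is_ideal K" and P0: "is_prime_ideal P0" "P0 = colon K b" "b \<notin> K"
  shows "{P. is_ass K P} \<subseteq> insert P0 {P. is_ass (addgen K b) P}"
proof
  fix Q assume "Q \<in> {P. is_ass K P}"
  then obtain c where Q: "is_prime_ideal Q" "Q = colon K c" "c \<notin> K" unfolding is_ass_def by blast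
  show "Q \<in> insert P0 {P. is_ass (addgen K b) P}"
  proof (cases "\<exists>r. r * c \<in> addgen K b \<and> r * c \<notin> K")
    case True
    then obtain r k s where r: "r * c = k + s * b" "k \<in> K" "r * c \<notin> K"
      unfolding addgen_def by blast
    have rQ: "r \<notin> Q" using r Q unfolding colon_def by simp
    have sP: "s \<notin> P0"
    proof
      assume "s \<in> P0"
      then have "s * b \<in> K" using P0 unfolding colon_def by simp
      then have "r * c \<in> K" using r ideal_add[OF K] by simp
      then show False using r by simp
    qed
    have "Q = colon K (r * c)" using colon_mult_prime[OF K Q(1) Q(2) rQ] by simp
    also have "\<dots> = colon K (s * b)" using r colon_add_mem[OF K r(2)] by simp
    also have "\<dots> = P0" by (rule colon_mult_prime[OF K P0(1) P0(2) sP])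
    finally show ?thesis by simp
  next
    case False
    have sub: "K \<subseteq> addgen K b" by (rule addgen_sub[OF K])
    have "colon (addgen K b) c = colon K c"
      using False sub unfolding colon_def by blast
    moreover have "c \<notin> addgen K b" using False by (metis mult_1 Q(3))
    ultimately have "is_ass (addgen K b) Q" unfolding is_ass_def using Q by metis
    then show ?thesis by simp
  qed
qed

lemma finite_ass:
  assumes N: "noetherian_ring TYPE('a::comm_ring_1)"
  shows "is_ideal (K::'a set) \<Longrightarrow> finite {P. is_ass K P}"
proof (induction K rule: wf_induct[OF noeth_wf[OF N]])
  case (1 K)
  show ?case
  proof (cases "K = UNIV")
    case True
    then show ?thesis unfolding is_ass_def by simp
  next
    case False
    then obtain a where a: "a \<notin> K" by blast
    obtain P0 where P0: "is_ass K P0" using ass_exists[OF N "1.prems" a] by blast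
    then obtain b where b: "is_prime_ideal P0" "P0 = colon K b" "b \<notin> K" unfolding is_ass_def by blast
    have K': "is_ideal (addgen K b)" by (rule addgen_ideal[OF "1.prems"])
    have "b \<in> addgen K b" using addgen_mem[OF "1.prems" ideal_0[OF "1.prems"], of 1 b] by simp
    then have "K \<subset> addgen K b" using addgen_sub[OF "1.prems"] b by blast
    then have "(addgen K b, K) \<in> ideal_gt" unfolding ideal_gt_def using K' "1.prems" by blast
    then have "finite {P. is_ass (addgen K b) P}" using "1.IH" K' by blast
    then show ?thesis using ass_step[OF "1.prems" b] by (meson finite_insert finite_subset)
  qed
qed

lemma prime_prod:
  assumes P: "is_prime_ideal P" and fin: "finite A"
  shows "prod g A \<in> P \<Longrightarrow> \<exists>a\<in>A. g a \<in> P"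
  using fin
proof (induction A rule: finite_induct)
  case empty
  then show ?case using P ideal_one unfolding is_prime_ideal_def by auto
next
  case (insert x F)
  then have "g x * prod g F \<in> P" by simp
  then have "g x \<in> P \<or> prod g F \<in> P" using P unfolding is_prime_ideal_def by blast
  then show ?case using insert by blast
qed

lemma prod_mem_ideal:
  assumes J: "is_ideal J" and fin: "finite A" and a: "a \<in> A" and ga: "g a \<in> J"
  shows "prod g A \<in> J"
proof -
  have "prod g A = g a * prod g (A - {a})" using prod.remove[OF fin a] by simp
  then show ?thesis using ideal_mult_right[OF J ga] by simp
qed

lemma prime_avoid:
  assumes "finite F"
  shows "(\<forall>P\<in>F. is_prime_ideal P) \<Longrightarrow> is_ideal I \<Longrightarrow> I \<subseteq> \<Union>F \<Longrightarrow> \<exists>P\<in>F. I \<subseteq> P"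
  using assms
proof (induction F rule: finite_psubset_induct)
  case (psubset F)
  show ?case
  proof (cases "\<exists>P\<in>F. I \<subseteq> \<Union>(F - {P})")
    case True
    then obtain P where P: "P \<in> F" "I \<subseteq> \<Union>(F - {P})" by blast
    then have "F - {P} \<subset> F" by blast
    then have "\<exists>Q\<in>F - {P}. I \<subseteq> Q" using psubset.IH psubset.prems P by blast
    then show ?thesis by blast
  next
    case False
    then have "\<forall>P\<in>F. \<exists>x. x \<in> I \<and> x \<notin> \<Union>(F - {P})" by blast
    then obtain xx where xx: "\<And>P. P \<in> F \<Longrightarrow> xx P \<in> I \<and> xx P \<notin> \<Union>(F - {P})" by metis
    have xxP: "xx P \<in> P" if "P \<in> F" for P
    proof -
      have "xx P \<in> \<Union>F" using xx[OF that] psubset.prems by blast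
      then show ?thesis using xx[OF that] by blast
    qed
    have "0 \<in> I" using ideal_0 psubset.prems by blast
    then obtain P1 where P1: "P1 \<in> F" using psubset.prems by blast
    show ?thesis
    proof (cases "F - {P1} = {}")
      case True
      then have "F = {P1}" using P1 by blast
      then show ?thesis using psubset.prems by auto
    next
      case ne: False
      have I: "is_ideal I" using psubset.prems by blast
      define y where "y = xx P1 + prod xx (F - {P1})"
      obtain Q0 where Q0: "Q0 \<in> F - {P1}" using ne by blast
      have finF: "finite (F - {P1})" using psubset.hyps by blast
      have "prod xx (F - {P1}) \<in> I"
        using prod_mem_ideal[OF I finF Q0] xx Q0 by blast
      then have "y \<in> I" unfolding y_def using ideal_add[OF I] xx[OF P1] by blast
      then obtain P where P: "P \<in> F" "y \<in> P" using psubset.prems by blast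
      have Pid: "is_ideal P" using psubset.prems P unfolding is_prime_ideal_def by blast
      show ?thesis
      proof (cases "P = P1")
        case True
        then have "prod xx (F - {P1}) \<in> P1"
          using P ideal_diff[OF Pid] xxP[OF P1] unfolding y_def by (metis add_diff_cancel_left')
        then obtain Q where Q: "Q \<in> F - {P1}" "xx Q \<in> P1"
          using prime_prod[OF _ finF] psubset.prems P1 by blast
        then have "xx Q \<in> \<Union>(F - {Q})" using P1 by blast
        then show ?thesis using xx Q by blast
      next
        case False
        then have "P \<in> F - {P1}" using P by blast
        have "xx P \<in> P" using xxP P by blast
        then have "prod xx (F - {P1}) \<in> P"
          using prod_mem_ideal[OF Pid finF \<open>P \<in> F - {P1}\<close>, of xx] by blast
        then have "xx P1 \<in> P"
          using P ideal_diff[OF Pid] unfolding y_def by (metis add_diff_cancel_right')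
        then have "xx P1 \<in> \<Union>(F - {P1})" using \<open>P \<in> F - {P1}\<close> by blast
        then show ?thesis using xx[OF P1] by blast
      qed
    qed
  qed
qed

lemma zero_div_avoid:
  assumes N: "noetherian_ring TYPE('a::comm_ring_1)" and J: "is_ideal (J::'a set)" and I: "is_ideal I"
    and zd: "\<And>x. x \<in> I \<Longrightarrow> \<not> reg J x"
  shows "\<exists>a. a \<notin> J \<and> (\<forall>x\<in>I. x * a \<in> J)"
proof -
  have "I \<subseteq> \<Union>{P. is_ass J P}"
  proof
    fix x assume x: "x \<in> I"
    then obtain r where r: "r * x \<in> J" "r \<notin> J" using zd unfolding reg_def by blast
    obtain P where P: "is_ass J P" "colon J r \<subseteq> P" using ass_exists[OF N J r(2)] by blast
    have "x \<in> colon J r" using r unfolding colon_def by (simp add: mult.commute)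
    then show "x \<in> \<Union>{P. is_ass J P}" using P by blast
  qed
  moreover have "\<forall>P\<in>{P. is_ass J P}. is_prime_ideal P" unfolding is_ass_def by blast
  ultimately obtain P where "is_ass J P" "I \<subseteq> P"
    using prime_avoid[OF finite_ass[OF N J]] I by blast
  then obtain a where "a \<notin> J" "P = colon J a" "I \<subseteq> P" unfolding is_ass_def by blast
  then show ?thesis unfolding colon_def by blast
qed

lemma exists_reg:
  assumes N: "noetherian_ring TYPE('a::comm_ring_1)" and J: "is_ideal (J::'a set)" and I: "is_ideal I"
    and col: "\<And>a. (\<forall>x\<in>I. x * a \<in> J) \<Longrightarrow> a \<in> J"
  shows "\<exists>x\<in>I. reg J x"
  using zero_div_avoid[OF N J I] col by blast

lemma lm_noeth: "local_ring_max (m::'a::comm_ring_1 set) \<Longrightarrow> noetherian_ring TYPE('a)"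
  unfolding local_ring_max_def by blast
lemma lm_ideal: "local_ring_max m \<Longrightarrow> is_ideal m"
  unfolding local_ring_max_def is_maximal_ideal_def by blast
lemma lm_proper: "local_ring_max m \<Longrightarrow> m \<noteq> UNIV"
  unfolding local_ring_max_def is_maximal_ideal_def by blast

lemma proper_in_max:
  assumes L: "local_ring_max (m::'a::comm_ring_1 set)" and K: "is_ideal K" "K \<noteq> UNIV"
  shows "K \<subseteq> m"
proof -
  define S where "S = {A. is_ideal A \<and> A \<noteq> UNIV \<and> K \<subseteq> A}"
  have KS: "K \<in> S" unfolding S_def using K by blast
  obtain M where M: "M \<in> S" and max: "\<forall>B\<in>S. M \<subseteq> B \<longrightarrow> B = M"
    using noeth_max[OF lm_noeth[OF L] KS] unfolding S_def by blast
  have "is_maximal_ideal M"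
    unfolding is_maximal_ideal_def
  proof (intro conjI allI impI)
    show "is_ideal M" "M \<noteq> UNIV" using M unfolding S_def by auto
  next
    fix J assume J: "is_ideal J \<and> M \<subseteq> J"
    show "J = M \<or> J = UNIV"
    proof (cases "J = UNIV")
      case False
      then have "J \<in> S" using J M unfolding S_def by blast
      then show ?thesis using max J by blast
    qed simp
  qed
  then have "M = m" using L unfolding local_ring_max_def by blast
  then show ?thesis using M unfolding S_def by blast
qed

lemma lm_unit:
  assumes L: "local_ring_max (m::'a::comm_ring_1 set)" and y: "y \<in> m"
  shows "\<exists>u. u * (1 - y) = 1"
proof (rule ccontr)
  assume nu: "\<not> (\<exists>u. u * (1 - y) = 1)"
  define K where "K = {r * (1 - y) | r. True}"
  have K: "is_ideal K" unfolding K_def is_ideal_def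
  proof (intro conjI ballI allI)
    show "0 \<in> {r * (1 - y) |r. True}" by (intro CollectI exI[of _ 0]) simp
  next
    fix a b assume "a \<in> {r * (1 - y) |r. True}" "b \<in> {r * (1 - y) |r. True}"
    then obtain r s where "a = r * (1 - y)" "b = s * (1 - y)" by blast
    then have "a + b = (r + s) * (1 - y)" by (simp add: distrib_right)
    then show "a + b \<in> {r * (1 - y) |r. True}" by blast
  next
    fix c a assume "a \<in> {r * (1 - y) |r. True}"
    then obtain r where "a = r * (1 - y)" by blast
    then have "c * a = (c * r) * (1 - y)" by (simp add: mult.assoc)
    then show "c * a \<in> {r * (1 - y) |r. True}" by blast
  qed
  have "1 \<notin> K" using nu unfolding K_def by auto
  then have "K \<noteq> UNIV" by blast
  then have "K \<subseteq> m" by (rule proper_in_max[OF L K])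
  moreover have "1 - y \<in> K" unfolding K_def by (intro CollectI exI[of _ 1]) simp
  ultimately have "1 - y \<in> m" by blast
  then have "(1 - y) + y \<in> m" using ideal_add[OF lm_ideal[OF L] _ y] by blast
  then have "1 \<in> m" by simp
  then show False using ideal_one[OF lm_ideal[OF L]] lm_proper[OF L] by blast
qed

definition sumset :: "'a::comm_ring_1 set \<Rightarrow> 'a set \<Rightarrow> 'a set" where
  "sumset A B = {a + b | a b. a \<in> A \<and> b \<in> B}"

lemma nakayama:
  assumes L: "local_ring_max (m::'a::comm_ring_1 set)" and J: "is_ideal J" and Nid: "is_ideal N"
    and JN: "J \<subseteq> N" and y: "y \<in> m" and NJ: "N \<subseteq> {j + y * r | j r. j \<in> J \<and> r \<in> N}"
  shows "N \<subseteq> J"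
proof -
  obtain h k where hk: "N = ideal_gen h k" using lm_noeth[OF L] Nid unfolding noetherian_ring_def by blast
  have main: "k' \<le> k \<Longrightarrow> N \<subseteq> sumset J (ideal_gen h k')" for k'
  proof (induction "k - k'" arbitrary: k')
    case 0
    then have "k' = k" by simp
    then show ?case unfolding sumset_def hk using ideal_0[OF J] by force
  next
    case (Suc d)
    then have kk: "k' < k" "Suc k' \<le> k" "d = k - Suc k'" by auto
    have IH: "N \<subseteq> sumset J (ideal_gen h (Suc k'))" using Suc.hyps(1)[OF kk(3)] kk(2) by blast
    have G: "is_ideal (ideal_gen h k')" by (rule ideal_gen_ideal)
    have hN: "h k' \<in> N" unfolding hk using ideal_gen_mem kk(1) by blast
    then obtain j r where jr: "h k' = j + y * r" "j \<in> J" "r \<in> N" using NJ by blast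
    then obtain j' s where js: "r = j' + s" "j' \<in> J" "s \<in> ideal_gen h (Suc k')"
      using IH unfolding sumset_def by blast
    then obtain g c where gc: "s = g + c * h k'" "g \<in> ideal_gen h k'"
      unfolding ideal_gen_Suc addgen_def by blast
    obtain u where u: "u * (1 - y * c) = 1"
      using lm_unit[OF L ideal_mult_right[OF lm_ideal[OF L] y]] by blast
    have "(1 - y * c) * h k' = j + y * j' + y * g"
      using jr(1) js(1) gc(1) by (simp add: algebra_simps)
    then have "h k' = u * j + u * y * j' + u * y * g"
      by (metis (no_types, lifting) u distrib_left mult.assoc mult_1)
    then have hk': "h k' = (u * j + u * y * j') + (u * y) * g" by (simp add: mult.assoc)
    have j1: "u * j + u * y * j' \<in> J"
      using ideal_add[OF J ideal_mult_left[OF J jr(2)] ideal_mult_left[OF J js(2)]] by simp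
    have g1: "(u * y) * g \<in> ideal_gen h k'" by (rule ideal_mult_left[OF G gc(2)])
    show ?case
    proof
      fix x assume "x \<in> N"
      then obtain j0 s0 where x: "x = j0 + s0" "j0 \<in> J" "s0 \<in> ideal_gen h (Suc k')"
        using IH unfolding sumset_def by blast
      then obtain g0 c0 where g0: "s0 = g0 + c0 * h k'" "g0 \<in> ideal_gen h k'"
        unfolding ideal_gen_Suc addgen_def by blast
      have "x = (j0 + c0 * (u * j + u * y * j')) + (g0 + c0 * ((u * y) * g))"
        using x(1) g0(1) hk' by (simp add: algebra_simps)
      moreover have "j0 + c0 * (u * j + u * y * j') \<in> J"
        using ideal_add[OF J x(2) ideal_mult_left[OF J j1]] .
      moreover have "g0 + c0 * ((u * y) * g) \<in> ideal_gen h k'"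
        using ideal_add[OF G g0(2) ideal_mult_left[OF G g1]] .
      ultimately show "x \<in> sumset J (ideal_gen h k')" unfolding sumset_def by blast
    qed
  qed
  have "N \<subseteq> sumset J (ideal_gen h 0)" using main by simp
  then show ?thesis unfolding sumset_def ideal_gen_0 by auto
qed

lemma ass_up:
  assumes L: "local_ring_max (m::'a::comm_ring_1 set)" and J: "is_ideal J" and P: "is_ass J P"
    and y: "y \<in> m" and r: "reg J y"
  shows "\<exists>Q. is_ass (addgen J y) Q \<and> P \<subset> Q"
proof -
  obtain a where a: "is_prime_ideal P" "a \<notin> J" "P = colon J a" using P unfolding is_ass_def by blast
  define N where "N = {r. \<forall>p\<in>P. r * p \<in> J}"
  have Nid: "is_ideal N" unfolding N_def is_ideal_def
    using ideal_0[OF J] ideal_add[OF J] ideal_mult_left[OF J]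
    by (auto simp: distrib_right mult.assoc)
  have JN: "J \<subseteq> N" unfolding N_def using ideal_mult_right[OF J] by blast
  have aN: "a \<in> N" unfolding N_def using a unfolding colon_def by (simp add: mult.commute)
  have "\<not> N \<subseteq> J" using aN a by blast
  then have "\<not> N \<subseteq> {j + y * r | j r. j \<in> J \<and> r \<in> N}"
    using nakayama[OF L J Nid JN y] by blast
  then obtain b where b: "b \<in> N" "b \<notin> {j + y * r | j r. j \<in> J \<and> r \<in> N}" by blast
  have J': "is_ideal (addgen J y)" by (rule addgen_ideal[OF J])
  have bJ': "b \<notin> addgen J y"
  proof
    assume "b \<in> addgen J y"
    then obtain j s where js: "b = j + s * y" "j \<in> J" unfolding addgen_def by blast
    have "s \<in> N" unfolding N_def
    proof (intro CollectI ballI)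
      fix p assume p: "p \<in> P"
      have "b * p \<in> J" using b(1) p unfolding N_def by blast
      moreover have "j * p \<in> J" using ideal_mult_right[OF J js(2)] .
      ultimately have "b * p - j * p \<in> J" using ideal_diff[OF J] by blast
      moreover have "b * p - j * p = (s * p) * y" using js(1) by (simp add: algebra_simps)
      ultimately show "s * p \<in> J" using r unfolding reg_def by simp
    qed
    then show False using b(2) js by (auto simp: mult.commute)
  qed
  obtain Q where Q: "is_ass (addgen J y) Q" "colon (addgen J y) b \<subseteq> Q"
    using ass_exists[OF lm_noeth[OF L] J' bJ'] by blast
  have "P \<subseteq> colon (addgen J y) b"
  proof
    fix p assume "p \<in> P"
    then have "b * p \<in> J" using b(1) unfolding N_def by blast
    then show "p \<in> colon (addgen J y) b" unfolding colon_def using addgen_sub[OF J]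
      by (auto simp: mult.commute)
  qed
  moreover have "y \<in> colon (addgen J y) b" unfolding colon_def addgen_def
    using ideal_0[OF J] by (intro CollectI exI[of _ 0] exI[of _ b]) (simp add: mult.commute)
  moreover have "y \<notin> P"
  proof
    assume "y \<in> P"
    then have "y * a \<in> J" using a unfolding colon_def by simp
    then have "a \<in> J" using r unfolding reg_def by (simp add: mult.commute)
    then show False using a by simp
  qed
  ultimately show ?thesis using Q by blast
qed

lemma sorted_hd_le:
  assumes "sorted_wrt (\<subset>) qs" "q \<in> set qs"
  shows "hd qs \<subseteq> q"
  using assms by (cases qs) auto

lemma chain_up:
  assumes L: "local_ring_max (m::'a::comm_ring_1 set)" and rs: "regseq x t" and xm: "\<And>i. i < t \<Longrightarrow> x i \<in> m"
  shows "k \<le> t \<Longrightarrow> is_ass (ideal_gen x k) P \<Longrightarrow> \<exists>qs. prime_chain qs \<and> hd qs = P \<and> length qs = t - k + 1"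
proof (induction "t - k" arbitrary: k P)
  case 0
  then have "prime_chain [P]" unfolding prime_chain_def is_ass_def by auto
  then show ?case using 0 by (intro exI[of _ "[P]"]) simp
next
  case (Suc d)
  then have k: "k < t" "d = t - Suc k" by auto
  have r: "reg (ideal_gen x k) (x k)" using rs k unfolding regseq_def by blast
  obtain Q where Q: "is_ass (addgen (ideal_gen x k) (x k)) Q" "P \<subset> Q"
    using ass_up[OF L ideal_gen_ideal Suc.prems(2) xm[OF k(1)] r] by blast
  then have "is_ass (ideal_gen x (Suc k)) Q" by (simp add: ideal_gen_Suc)
  then obtain qs where qs: "prime_chain qs" "hd qs = Q" "length qs = t - Suc k + 1"
    using Suc.hyps(1)[OF k(2)] k by auto
  have Pp: "is_prime_ideal P" using Suc.prems unfolding is_ass_def by blast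
  have "prime_chain (P # qs)"
    unfolding prime_chain_def
  proof (intro conjI)
    show "P # qs \<noteq> []" by simp
    show "\<forall>Pa\<in>set (P # qs). is_prime_ideal Pa" using Pp qs unfolding prime_chain_def by auto
    have "\<forall>q\<in>set qs. P \<subset> q" using sorted_hd_le[of qs] qs Q unfolding prime_chain_def by blast
    then show "sorted_wrt (\<subset>) (P # qs)" using qs unfolding prime_chain_def by simp
  qed
  then show ?case using qs k by (intro exI[of _ "P # qs"]) simp
qed

lemma height_exists:
  assumes D: "krull_dim_eq TYPE('a::comm_ring_1) d" and P: "is_prime_ideal (P::'a set)"
  shows "\<exists>h. prime_height_eq P h"
proof -
  define Ls where "Ls = {length ps | ps. prime_chain ps \<and> last ps = P}"
  have bd: "Ls \<subseteq> {..d+1}" using D unfolding Ls_def krull_dim_eq_def by auto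
  have fin: "finite Ls" using finite_subset[OF bd] by simp
  have "prime_chain [P]" using P unfolding prime_chain_def by simp
  then have one: "1 \<in> Ls" unfolding Ls_def by (intro CollectI exI[of _ "[P]"]) simp
  define h where "h = Max Ls - 1"
  have "Max Ls \<in> Ls" using fin one by (intro Max_in) auto
  moreover have "Max Ls \<ge> 1" using fin one by (simp add: Max_ge)
  ultimately have ex: "\<exists>ps. prime_chain ps \<and> last ps = P \<and> length ps = h + 1"
    unfolding h_def Ls_def by auto
  have "\<forall>ps. prime_chain ps \<and> last ps = P \<longrightarrow> length ps \<le> h + 1"
  proof (intro allI impI)
    fix ps assume "prime_chain ps \<and> last ps = P"
    then have "length ps \<in> Ls" unfolding Ls_def by blast
    then have "length ps \<le> Max Ls" using fin by simp
    then show "length ps \<le> h + 1" unfolding h_def using \<open>Max Ls \<ge> 1\<close> by simp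
  qed
  then show ?thesis using ex unfolding prime_height_eq_def by blast
qed

lemma chain_concat:
  assumes ps: "prime_chain ps" "last ps = P" and qs: "prime_chain qs" "hd qs = P"
  shows "prime_chain (butlast ps @ qs) \<and> length (butlast ps @ qs) = length ps - 1 + length qs"
proof -
  have psne: "ps \<noteq> []" and qsne: "qs \<noteq> []" using ps qs unfolding prime_chain_def by auto
  have pseq: "ps = butlast ps @ [P]" using psne ps(2) by (metis append_butlast_last_id)
  have sps: "sorted_wrt (\<subset>) (butlast ps @ [P])" using ps pseq unfolding prime_chain_def by metis
  then have s1: "sorted_wrt (\<subset>) (butlast ps)" and s2: "\<forall>x\<in>set (butlast ps). x \<subset> P"
    by (simp_all add: sorted_wrt_append)
  have s3: "\<forall>y\<in>set qs. P \<subseteq> y" using sorted_hd_le[of qs] qs unfolding prime_chain_def by blast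
  have "sorted_wrt (\<subset>) (butlast ps @ qs)"
    using s1 s2 s3 qs unfolding prime_chain_def by (auto simp: sorted_wrt_append)
  moreover have "\<forall>x\<in>set (butlast ps @ qs). is_prime_ideal x"
    using ps qs unfolding prime_chain_def by (auto dest: in_set_butlastD)
  ultimately show ?thesis using qsne unfolding prime_chain_def by simp
qed

lemma ideal_gen_cong: "(\<And>j. j < i \<Longrightarrow> x j = x' j) \<Longrightarrow> ideal_gen x i = ideal_gen x' i"
  unfolding ideal_gen_def by (metis (no_types, lifting) lessThan_iff sum.cong)

lemma regseq_upd:
  assumes rs: "regseq x k" and z: "reg (ideal_gen x k) z"
  shows "regseq (x(k := z)) (Suc k)"
  unfolding regseq_def
proof (intro allI impI)
  fix i assume i: "i < Suc k"
  have eq: "ideal_gen (x(k := z)) i = ideal_gen x i" using i by (intro ideal_gen_cong) auto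
  show "reg (ideal_gen (x(k := z)) i) ((x(k := z)) i)"
  proof (cases "i = k")
    case True
    then show ?thesis using z eq by simp
  next
    case False
    then show ?thesis using rs i eq unfolding regseq_def by simp
  qed
qed

locale cmctx =
  fixes m :: "'a::comm_ring_1 set" and d :: nat
  assumes cm: "cohen_macaulay_local m d"
begin

lemma L: "local_ring_max m" using cm unfolding cohen_macaulay_local_def by blast
lemma N: "noetherian_ring TYPE('a)" using lm_noeth[OF L] .
lemma D: "krull_dim_eq TYPE('a) d" using cm unfolding cohen_macaulay_local_def by blast

lemma depth_seq: "\<exists>y. regseq y d \<and> (\<forall>i<d. y i \<in> m)"
proof -
  obtain y where "regular_seq_in m y d" using cm unfolding cohen_macaulay_local_def depth_eq_def by blast
  then show ?thesis unfolding regular_seq_in_def regseq_def reg_def by blast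
qed

lemma m_gen: "\<exists>mg s. m = ideal_gen mg s"
  using N lm_ideal[OF L] unfolding noetherian_ring_def by blast

lemma extend_step:
  assumes rs: "regseq x j" and xm: "\<And>i. i < j \<Longrightarrow> x i \<in> m" and jd: "j < d"
  shows "\<exists>z\<in>m. reg (ideal_gen x j) z"
proof -
  obtain mg s where ms: "m = ideal_gen mg s" using m_gen by blast
  obtain y where y: "regseq y d" "\<forall>i<d. y i \<in> m" using depth_seq by blast
  have KV0: "\<And>i. s < i + d \<Longrightarrow> KV s mg {0} i"
    using KV_regseq_in[OF y(1), of mg s] y(2) ms by blast
  have "KV s mg (ideal_gen x j) s" by (rule KV_regseq_quot[OF rs KV0]) (use jd in auto)
  then have top: "\<And>r. (\<And>l. l < s \<Longrightarrow> r * mg l \<in> ideal_gen x j) \<Longrightarrow> r \<in> ideal_gen x j"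
    using KV_top[OF ideal_gen_ideal] by blast
  have "\<exists>z\<in>m. reg (ideal_gen x j) z"
  proof (rule exists_reg[OF N ideal_gen_ideal lm_ideal[OF L]])
    fix a assume aa: "\<forall>z\<in>m. z * a \<in> ideal_gen x j"
    have "a * mg l \<in> ideal_gen x j" if "l < s" for l
    proof -
      have "mg l \<in> m" using ideal_gen_mem[OF that, of mg] ms by simp
      then have "mg l * a \<in> ideal_gen x j" using aa by blast
      then show ?thesis by (simp add: mult.commute)
    qed
    then show "a \<in> ideal_gen x j" using top by blast
  qed
  then show ?thesis .
qed

lemma extend:
  assumes "k \<le> d"
  shows "regseq x k \<Longrightarrow> (\<And>i. i < k \<Longrightarrow> x i \<in> m) \<Longrightarrow>
    \<exists>x'. regseq x' d \<and> (\<forall>i<d. x' i \<in> m) \<and> (\<forall>i<k. x' i = x i)"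
  using assms
proof (induction "d - k" arbitrary: k x)
  case 0
  then have "k = d" by simp
  then show ?case using 0 by blast
next
  case (Suc e)
  then have k: "k < d" "e = d - Suc k" by auto
  obtain z where z: "z \<in> m" "reg (ideal_gen x k) z" using extend_step[OF Suc.prems(1)] Suc.prems k by blast
  have rs: "regseq (x(k := z)) (Suc k)" by (rule regseq_upd[OF Suc.prems(1) z(2)])
  have xm: "\<And>i. i < Suc k \<Longrightarrow> (x(k := z)) i \<in> m" using Suc.prems z by auto
  obtain x' where x': "regseq x' d" "\<forall>i<d. x' i \<in> m" "\<forall>i<Suc k. x' i = (x(k := z)) i"
    using Suc.hyps(1)[OF k(2) rs xm] k by auto
  then show ?case by (intro exI[of _ x']) auto
qed

lemma regseq_in_ideal:
  fixes I :: "'a set"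
  assumes I: "is_ideal I" and ht: "ideal_height_eq I g"
  shows "k \<le> g \<Longrightarrow> \<exists>x. regseq x k \<and> (\<forall>i<k. x i \<in> I)"
proof (induction k)
  case 0
  then show ?case unfolding regseq_def by simp
next
  case (Suc k)
  then obtain x where x: "regseq x k" "\<forall>i<k. x i \<in> I" by auto
  define J where "J = ideal_gen x k"
  have col: "a \<in> J" if aI: "\<forall>z\<in>I. z * a \<in> J" for a
  proof (rule ccontr)
    assume a: "a \<notin> J"
    obtain P where P: "is_ass J P" "colon J a \<subseteq> P"
      using ass_exists[OF N ideal_gen_ideal[of x k] a[unfolded J_def]] unfolding J_def by blast
    have IP: "I \<subseteq> P" using aI P(2) unfolding colon_def by blast
    have Pp: "is_prime_ideal P" using P unfolding is_ass_def by blast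
    obtain h where h: "prime_height_eq P h" using height_exists[OF D Pp] by blast
    have gh: "g \<le> h" using ht Pp IP h unfolding ideal_height_eq_def by blast
    obtain ps where ps: "prime_chain ps" "last ps = P" "length ps = h + 1"
      using h unfolding prime_height_eq_def by blast
    have hd: "h \<le> d" using D ps unfolding krull_dim_eq_def by force
    have "I \<noteq> UNIV" using IP Pp unfolding is_prime_ideal_def by blast
    then have Im: "I \<subseteq> m" by (rule proper_in_max[OF L I])
    show False
    proof (cases "k < d")
      case False
      then show ?thesis using gh hd Suc.prems by simp
    next
      case True
      obtain x' where x': "regseq x' d" "\<forall>i<d. x' i \<in> m" "\<forall>i<k. x' i = x i"
        using extend[of k x] True x Im by force
      have "ideal_gen x' k = J" unfolding J_def using x'(3) by (intro ideal_gen_cong) auto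
      then have "is_ass (ideal_gen x' k) P" using P by simp
      then obtain qs where qs: "prime_chain qs" "hd qs = P" "length qs = d - k + 1"
        using chain_up[OF L x'(1), of k P] x'(2) True by auto
      have "prime_chain (butlast ps @ qs) \<and> length (butlast ps @ qs) = length ps - 1 + length qs"
        by (rule chain_concat[OF ps(1,2) qs(1,2)])
      then have "length ps - 1 + length qs \<le> d + 1" using D unfolding krull_dim_eq_def by metis
      then show False using ps qs gh Suc.prems True by simp
    qed
  qed
  obtain z where z: "z \<in> I" "reg J z"
    using exists_reg[OF N ideal_gen_ideal I, of x k] col unfolding J_def by blast
  have "regseq (x(k := z)) (Suc k)" using regseq_upd[OF x(1)] z unfolding J_def by blast
  moreover have "\<forall>i<Suc k. (x(k := z)) i \<in> I" using x z by auto
  ultimately show ?case by blast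
qed

lemma koszul_vanish:
  fixes f :: "nat \<Rightarrow> 'a"
  assumes ht: "ideal_height_eq (ideal_gen f n) g"
  shows "(\<forall>i. n < i + g \<longrightarrow> KV n f {0} i) \<and> g \<le> n"
proof -
  obtain x where x: "regseq x g" "\<forall>i<g. x i \<in> ideal_gen f n"
    using regseq_in_ideal[OF ideal_gen_ideal ht] by blast
  have KV: "\<forall>i. n < i + g \<longrightarrow> KV n f {0} i"
    using KV_regseq_in[OF x(1), of f n] x(2) by blast
  have "g \<le> n"
  proof (rule ccontr)
    assume "\<not> g \<le> n"
    then have "KV n f {0} 0" using KV by simp
    then have "1 \<in> ideal_gen f n" by (rule KV_bottom)
    then have "ideal_gen f n = UNIV" using ideal_one[OF ideal_gen_ideal] by blast
    moreover obtain P where "is_prime_ideal P" "ideal_gen f n \<subseteq> P"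
      using ht unfolding ideal_height_eq_def by blast
    ultimately show False unfolding is_prime_ideal_def by blast
  qed
  then show ?thesis using KV by blast
qed

end

lemma lookup_constB_mult: "poly_mapping.lookup (constB r * p) k = r * poly_mapping.lookup p k"
  unfolding constB_def mult_map_scale_conv_mult[symmetric]
  by (simp add: map.rep_eq when_def)

lemma neg1_pow_mult: "(-1::'b::comm_ring_1) ^ c * q = (if even c then q else - q)"
  by (simp add: minus_one_power_iff)

lemma lookup_sgn_constB:
  "poly_mapping.lookup ((-1)^c * constB r * p) k = (-1)^c * r * poly_mapping.lookup p k"
  by (cases "even c") (simp_all add: minus_one_power_iff lookup_constB_mult lookup_uminus)

lemma lookup_dF:
  "poly_mapping.lookup (dF n f z T) k = kos n f (\<lambda>S. poly_mapping.lookup (z S) k) T"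
  unfolding dF_def kos_def
  by (simp add: lookup_sum lookup_sgn_constB)

lemma KV_lift:
  fixes f :: "nat \<Rightarrow> 'a::comm_ring_1"
  assumes KV: "KV n f {0} i" and z: "z \<in> ext n i" and cyc: "dF n f z = 0"
  shows "\<exists>w\<in>ext n (Suc i). dF n f w = z"
proof -
  define zc where "zc \<mu> = (\<lambda>S. poly_mapping.lookup (z S) \<mu>)" for \<mu>
  have zcext: "zc \<mu> \<in> ext n i" for \<mu>
  proof (rule extI)
    fix S assume "zc \<mu> S \<noteq> 0"
    then have "z S \<noteq> 0" unfolding zc_def by auto
    then show "S \<subseteq> {..<n} \<and> card S = i" using extD[OF z] by blast
  qed
  have zccyc: "kos n f (zc \<mu>) T = 0" for \<mu> T
    using lookup_dF[of n f z T \<mu>] cyc unfolding zc_def by simp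
  have ex: "\<exists>w. w \<in> ext n (Suc i) \<and> (\<forall>T. zc \<mu> T = kos n f w T)" for \<mu>
  proof -
    have "\<forall>T. kos n f (zc \<mu>) T \<in> {0}" using zccyc by simp
    then obtain w where w1: "w \<in> ext n (Suc i)" and w2: "\<forall>T. zc \<mu> T - kos n f w T \<in> {0}"
      using KV zcext[of \<mu>] unfolding KV_def by blast
    have "\<forall>T. zc \<mu> T = kos n f w T" using w2 by simp
    then show ?thesis using w1 by blast
  qed
  define W where "W \<mu> = (if zc \<mu> = (\<lambda>_. 0) then (\<lambda>_. 0) else (SOME w. w \<in> ext n (Suc i) \<and> (\<forall>T. zc \<mu> T = kos n f w T)))" for \<mu>
  have W: "W \<mu> \<in> ext n (Suc i) \<and> (\<forall>T. zc \<mu> T = kos n f (W \<mu>) T)" for \<mu>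
  proof (cases "zc \<mu> = (\<lambda>_. 0)")
    case True
    then show ?thesis unfolding W_def by simp
  next
    case False
    have e: "W \<mu> = (SOME w. w \<in> ext n (Suc i) \<and> (\<forall>T. zc \<mu> T = kos n f w T))"
      unfolding W_def using False by (rule if_not_P)
    show ?thesis unfolding e by (rule someI_ex[OF ex[of \<mu>]])
  qed
  have fin: "finite {\<mu>. W \<mu> S \<noteq> 0}" for S
  proof -
    have "{\<mu>. W \<mu> S \<noteq> 0} \<subseteq> (\<Union>S'\<in>Pow {..<n}. Poly_Mapping.keys (z S'))"
    proof
      fix \<mu> assume "\<mu> \<in> {\<mu>. W \<mu> S \<noteq> 0}"
      then have "zc \<mu> \<noteq> (\<lambda>_. 0)" unfolding W_def by auto
      then obtain S' where S': "poly_mapping.lookup (z S') \<mu> \<noteq> 0" unfolding zc_def by auto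
      then have "z S' \<noteq> 0" by auto
      then have "S' \<in> Pow {..<n}" using extD[OF z] by blast
      moreover have "\<mu> \<in> Poly_Mapping.keys (z S')" using S' by (simp add: in_keys_iff)
      ultimately show "\<mu> \<in> (\<Union>S'\<in>Pow {..<n}. Poly_Mapping.keys (z S'))" by blast
    qed
    moreover have "finite (\<Union>S'\<in>Pow {..<n}. Poly_Mapping.keys (z S'))" by simp
    ultimately show ?thesis by (rule finite_subset)
  qed
  define w where "w S = Abs_poly_mapping (\<lambda>\<mu>. W \<mu> S)" for S
  have lw: "poly_mapping.lookup (w S) = (\<lambda>\<mu>. W \<mu> S)" for S
    unfolding w_def using fin[of S] by (simp add: lookup_Abs_poly_mapping)
  have wext: "w \<in> ext n (Suc i)"
  proof (rule extI)
    fix S assume "w S \<noteq> 0"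
    have "\<exists>\<mu>. poly_mapping.lookup (w S) \<mu> \<noteq> 0"
    proof (rule ccontr)
      assume "\<not> (\<exists>\<mu>. poly_mapping.lookup (w S) \<mu> \<noteq> 0)"
      then have "w S = 0" by (intro poly_mapping_eqI) simp
      then show False using \<open>w S \<noteq> 0\<close> by simp
    qed
    then obtain \<mu> where "poly_mapping.lookup (w S) \<mu> \<noteq> 0" by blast
    then have "W \<mu> S \<noteq> 0" using lw by simp
    then show "S \<subseteq> {..<n} \<and> card S = Suc i" using extD W by blast
  qed
  have "dF n f w = z"
  proof
    fix T
    show "dF n f w T = z T"
    proof (rule poly_mapping_eqI)
      fix \<mu>
      have "poly_mapping.lookup (dF n f w T) \<mu> = kos n f (\<lambda>S. poly_mapping.lookup (w S) \<mu>) T"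
        by (rule lookup_dF)
      also have "(\<lambda>S. poly_mapping.lookup (w S) \<mu>) = W \<mu>" using lw by auto
      also have "kos n f (W \<mu>) T = zc \<mu> T" using W by simp
      finally show "poly_mapping.lookup (dF n f w T) \<mu> = poly_mapping.lookup (z T) \<mu>"
        unfolding zc_def .
    qed
  qed
  then show ?thesis using wext by blast
qed

lemma dFdF: "dF n f (dF n f x) = 0"
  unfolding dF_def by (rule kos_kos_zero)
lemma dYdY: "dY n (dY n x) = 0"
  unfolding dY_def by (rule kos_kos_zero)
lemma dFdY: "dF n f (dY n x) = - dY n (dF n f x)"
  using kos_anticomm[of n "\<lambda>j. constB (f j)" varB x] unfolding dF_def dY_def
  by (simp add: eq_neg_iff_add_eq_0)
lemma dF_add: "dF n f (x + y) = dF n f x + dF n f y" unfolding dF_def by (rule kos_add)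
lemma dY_add: "dY n (x + y) = dY n x + dY n y" unfolding dY_def by (rule kos_add)
lemma dF_diff: "dF n f (x - y) = dF n f x - dF n f y" unfolding dF_def by (rule kos_diff)
lemma dY_diff: "dY n (x - y) = dY n x - dY n y" unfolding dY_def by (rule kos_diff)
lemma dF_uminus: "dF n f (- x) = - dF n f x" unfolding dF_def by (rule kos_uminus)
lemma dY_uminus: "dY n (- x) = - dY n x" unfolding dY_def by (rule kos_uminus)
lemma dF_zero[simp]: "dF n f 0 = 0" unfolding dF_def by simp
lemma dY_zero[simp]: "dY n 0 = 0" unfolding dY_def by simp
lemma dF_ext: "x \<in> ext n i \<Longrightarrow> dF n f x \<in> ext n (i - 1)" unfolding dF_def by (rule kos_ext')
lemma dY_ext: "x \<in> ext n i \<Longrightarrow> dY n x \<in> ext n (i - 1)" unfolding dY_def by (rule kos_ext')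

lemma TmodD: "x \<in> Tmod n g k \<Longrightarrow> (if c + 2 \<le> g \<and> c \<le> k then x c \<in> ext n (n + 2 + k - g) else x c = 0)"
  unfolding Tmod_def mem_Collect_eq by (rule spec)
lemma TmodD1: "x \<in> Tmod n g k \<Longrightarrow> c + 2 \<le> g \<Longrightarrow> c \<le> k \<Longrightarrow> x c \<in> ext n (n + 2 + k - g)"
  using TmodD[of x n g k c] by simp
lemma TmodD2:
  assumes "x \<in> Tmod n g k" "\<not> (c + 2 \<le> g \<and> c \<le> k)" shows "x c = 0"
proof -
  have "(if c + 2 \<le> g \<and> c \<le> k then x c \<in> ext n (n + 2 + k - g) else x c = 0)"
    by (rule TmodD[OF assms(1)])
  then show ?thesis unfolding if_not_P[OF assms(2)] .
qed
lemma TmodI: "(\<And>c. c + 2 \<le> g \<Longrightarrow> c \<le> k \<Longrightarrow> x c \<in> ext n (n + 2 + k - g)) \<Longrightarrow>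
   (\<And>c. \<not> (c + 2 \<le> g \<and> c \<le> k) \<Longrightarrow> x c = 0) \<Longrightarrow> x \<in> Tmod n g k"
  unfolding Tmod_def mem_Collect_eq by simp

lemma Tmod_zero: "0 \<in> Tmod n g k"
  by (rule TmodI) auto
lemma Tmod_add: assumes x: "x \<in> Tmod n g k" and y: "y \<in> Tmod n g k" shows "x + y \<in> Tmod n g k"
proof (rule TmodI)
  fix c assume c: "c + 2 \<le> g" "c \<le> k"
  show "(x + y) c \<in> ext n (n + 2 + k - g)"
    using ext_add[OF TmodD1[OF x c] TmodD1[OF y c]] by simp
next
  fix c assume c: "\<not> (c + 2 \<le> g \<and> c \<le> k)"
  show "(x + y) c = 0" using TmodD2[OF x c] TmodD2[OF y c] by simp
qed
lemma Tmod_diff: assumes x: "x \<in> Tmod n g k" and y: "y \<in> Tmod n g k" shows "x - y \<in> Tmod n g k"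
proof (rule TmodI)
  fix c assume c: "c + 2 \<le> g" "c \<le> k"
  show "(x - y) c \<in> ext n (n + 2 + k - g)"
    using ext_diff[OF TmodD1[OF x c] TmodD1[OF y c]] by simp
next
  fix c assume c: "\<not> (c + 2 \<le> g \<and> c \<le> k)"
  show "(x - y) c = 0" using TmodD2[OF x c] TmodD2[OF y c] by simp
qed

lemma Tdiff_zero: "Tdiff n f g k 0 = 0"
  unfolding Tdiff_def by (auto simp: fun_eq_iff)
lemma Tdiff_add: "Tdiff n f g k (x + y) = Tdiff n f g k x + Tdiff n f g k y"
  unfolding Tdiff_def by (auto simp: fun_eq_iff dF_add dY_add)
lemma Tdiff_diff: "Tdiff n f g k (x - y) = Tdiff n f g k x - Tdiff n f g k y"
  unfolding Tdiff_def by (auto simp: fun_eq_iff dF_diff dY_diff)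

lemma Tdiff_Tmod:
  assumes x: "x \<in> Tmod n g (Suc k)"
  shows "Tdiff n f g (Suc k) x \<in> Tmod n g k"
proof (rule TmodI)
  fix c assume c: "c + 2 \<le> g" "c \<le> k"
  have e: "n + 2 + Suc k - g - 1 = n + 2 + k - g" by simp
  have a: "dF n f (x c) \<in> ext n (n + 2 + k - g)"
    using dF_ext[OF TmodD1[OF x c(1)], of f] c(2) e by simp
  have b: "dY n (x (c + 1)) \<in> ext n (n + 2 + k - g)"
  proof (cases "c + 1 + 2 \<le> g")
    case True
    then show ?thesis using dY_ext[OF TmodD1[OF x True]] c(2) e by simp
  next
    case False
    then have "x (c + 1) = 0" using TmodD2[OF x] by simp
    then show ?thesis by simp
  qed
  show "Tdiff n f g (Suc k) x c \<in> ext n (n + 2 + k - g)"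
    unfolding Tdiff_def using c a b ext_add by simp
next
  fix c assume "\<not> (c + 2 \<le> g \<and> c \<le> k)"
  then have "\<not> (c + 2 \<le> g \<and> c + 1 \<le> Suc k)" by simp
  then show "Tdiff n f g (Suc k) x c = 0" unfolding Tdiff_def by (rule if_not_P)
qed

lemma Tdiff_Tdiff:
  assumes x: "x \<in> Tmod n g (Suc (Suc k))"
  shows "Tdiff n f g (Suc k) (Tdiff n f g (Suc (Suc k)) x) = 0"
proof
  fix c
  show "Tdiff n f g (Suc k) (Tdiff n f g (Suc (Suc k)) x) c = 0 c"
  proof (cases "c + 2 \<le> g \<and> c + 1 \<le> Suc k")
    case False
    then show ?thesis unfolding Tdiff_def zero_fun_def by (subst if_not_P) auto
  next
    case True
    have t0: "Tdiff n f g (Suc (Suc k)) x c = dF n f (x c) + dY n (x (c + 1))"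
      unfolding Tdiff_def using True by simp
    have outer: "Tdiff n f g (Suc k) y c = dF n f (y c) + dY n (y (c + 1))" for y
      unfolding Tdiff_def using True by simp
    show ?thesis
    proof (cases "c + 1 + 2 \<le> g")
      case True2: True
      have t1: "Tdiff n f g (Suc (Suc k)) x (c + 1) = dF n f (x (c + 1)) + dY n (x (c + 1 + 1))"
        unfolding Tdiff_def using True True2 by simp
      show ?thesis unfolding outer t0 t1
        by (simp add: dF_add dY_add dFdF dYdY dFdY)
    next
      case False
      then have x1: "x (c + 1) = 0" using TmodD2[OF x] by simp
      have t1: "Tdiff n f g (Suc (Suc k)) x (c + 1) = 0"
        unfolding Tdiff_def using False by simp
      show ?thesis unfolding outer t0 t1 x1
        by (simp add: dFdF)
    qed
  qed
qed

section \<open>The bottom step (uses acyclicity of Z)\<close>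

lemma bottom_step:
  fixes f :: "nat \<Rightarrow> 'a::comm_ring_1"
  assumes KVB: "\<And>i z. n < i + g \<Longrightarrow> z \<in> ext n i \<Longrightarrow> dF n f z = 0 \<Longrightarrow> \<exists>w\<in>ext n (Suc i). dF n f w = z"
    and Zac: "Z_acyclic n f" and gn: "g \<le> n" and tg: "t + 2 \<le> g"
    and a: "a \<in> ext n (n + 2 + t - g)" and cyc: "dY n (dF n f a) = 0"
  shows "\<exists>w v. w \<in> ext n (n + 3 + t - g) \<and> v \<in> ext n (n + 3 + t - g) \<and>
     dF n f w - dY n v = a \<and> (g < t + 3 \<longrightarrow> v = 0)"
proof -
  define M where "M = Suc (n - g + t)"
  have NM: "n + 2 + t - g = Suc M" and N3: "n + 3 + t - g = Suc (Suc M)" unfolding M_def using gn by auto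
  have Mn: "M < n" "1 \<le> M" unfolding M_def using gn tg by auto
  define y where "y = dF n f a"
  have yext: "y \<in> ext n M" unfolding y_def using dF_ext[OF a[unfolded NM], of f] by simp
  have yZ: "y \<in> Zmod n f M" unfolding Zmod_def using Mn yext by (simp add: y_def dFdF)
  obtain u where u: "u \<in> Zmod n f (M + 1)" "dY n u = y"
    using Zac Mn yZ cyc unfolding Z_acyclic_def y_def by blast
  obtain v where v: "v \<in> ext n (Suc (Suc M))" "dF n f v = u" "\<not> Suc M < n \<longrightarrow> v = 0"
  proof (cases "Suc M < n")
    case True
    then have "u \<in> ext n (Suc M)" "dF n f u = 0" using u unfolding Zmod_def by auto
    moreover have "n < Suc M + g" unfolding M_def using gn by simp
    ultimately obtain v where "v \<in> ext n (Suc (Suc M))" "dF n f v = u" using KVB by blast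
    then show ?thesis using that True by blast
  next
    case False
    then have "u = 0" using u unfolding Zmod_def by simp
    then show ?thesis using that[of 0] by simp
  qed
  define b where "b = a + dY n v"
  have dv: "dY n v \<in> ext n (Suc M)" using dY_ext[OF v(1)] by simp
  have bext: "b \<in> ext n (Suc M)" unfolding b_def
    using ext_add[OF a[unfolded NM] dv] .
  have "dF n f b = y + dF n f (dY n v)" unfolding b_def y_def by (simp add: dF_add)
  also have "\<dots> = y - dY n u" by (simp add: dFdY v(2))
  also have "\<dots> = 0" using u(2) by simp
  finally have bcyc: "dF n f b = 0" .
  have "n < Suc M + g" unfolding M_def using gn by simp
  then obtain w where w: "w \<in> ext n (Suc (Suc M))" "dF n f w = b" using KVB bext bcyc by blast
  have "dF n f w - dY n v = a" using w(2) unfolding b_def by simp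
  moreover have "g < t + 3 \<longrightarrow> v = 0" using v(3) unfolding M_def using gn by auto
  ultimately show ?thesis unfolding N3 using w(1) v(1) by blast
qed

lemma Tdiff_at:
  "c + 2 \<le> g \<Longrightarrow> c + 1 \<le> k \<Longrightarrow> Tdiff n f g k x c = dF n f (x c) + dY n (x (c + 1))"
  unfolding Tdiff_def by simp
lemma Tdiff_off:
  "\<not> (c + 2 \<le> g \<and> c + 1 \<le> k) \<Longrightarrow> Tdiff n f g k x c = 0"
  unfolding Tdiff_def by (rule if_not_P)

lemma chase:
  fixes f :: "nat \<Rightarrow> 'a::comm_ring_1"
  assumes KVB: "\<And>i z. n < i + g \<Longrightarrow> z \<in> ext n i \<Longrightarrow> dF n f z = 0 \<Longrightarrow> \<exists>w\<in>ext n (Suc i). dF n f w = z"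
    and Zac: "Z_acyclic n f" and gn: "g \<le> n"
  shows "x \<in> Tmod n g (Suc k) \<Longrightarrow> Tdiff n f g (Suc k) x = 0 \<Longrightarrow>
    \<exists>z\<in>Tmod n g (Suc (Suc k)). Tdiff n f g (Suc (Suc k)) z = x"
proof -
  have main: "\<forall>x. x \<in> Tmod n g (Suc k) \<longrightarrow> Tdiff n f g (Suc k) x = 0 \<longrightarrow> (\<forall>c. t \<le> c \<longrightarrow> x c = 0) \<longrightarrow>
    (\<exists>z\<in>Tmod n g (Suc (Suc k)). Tdiff n f g (Suc (Suc k)) z = x)" for t
  proof (induction t)
    case 0
    show ?case
    proof (intro allI impI)
      fix x :: "nat \<Rightarrow> nat set \<Rightarrow> 'a polyB" assume "\<forall>c. 0 \<le> c \<longrightarrow> x c = 0"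
      then have "x = 0" by auto
      then show "\<exists>z\<in>Tmod n g (Suc (Suc k)). Tdiff n f g (Suc (Suc k)) z = x"
        using Tmod_zero Tdiff_zero by metis
    qed
  next
    case (Suc t)
    show ?case
    proof (intro allI impI)
      fix x :: "nat \<Rightarrow> nat set \<Rightarrow> 'a polyB"
      assume x: "x \<in> Tmod n g (Suc k)" and cyc: "Tdiff n f g (Suc k) x = 0"
        and top: "\<forall>c. Suc t \<le> c \<longrightarrow> x c = 0"
      have cyc': "Tdiff n f g (Suc k) x c = 0" for c using cyc by simp
      obtain z0 where z0: "z0 \<in> Tmod n g (Suc (Suc k))"
        and z0x: "\<forall>c. t \<le> c \<longrightarrow> Tdiff n f g (Suc (Suc k)) z0 c = x c"
      proof (cases "t + 2 \<le> g \<and> t \<le> Suc k")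
        case False
        have "\<forall>c. t \<le> c \<longrightarrow> Tdiff n f g (Suc (Suc k)) 0 c = x c"
        proof (intro allI impI)
          fix c assume "t \<le> c"
          show "Tdiff n f g (Suc (Suc k)) 0 c = x c"
          proof (cases "c = t")
            case True
            then show ?thesis using TmodD2[OF x False] by (simp add: Tdiff_zero)
          next
            case False
            then show ?thesis using top \<open>t \<le> c\<close> by (simp add: Tdiff_zero)
          qed
        qed
        then show ?thesis using that Tmod_zero by blast
      next
        case True
        then have tg: "t + 2 \<le> g" by simp
        show ?thesis
        proof (cases "t \<le> k")
          case tk: True
          have "dF n f (x t) + dY n (x (t + 1)) = 0"
            using cyc'[of t] Tdiff_at[of t g "Suc k" n f x] tg tk by simp
          moreover have "x (t + 1) = 0" using top by simp
          ultimately have dxt: "dF n f (x t) = 0" by simp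
          have xt: "x t \<in> ext n (n + 2 + Suc k - g)" using TmodD1[OF x tg] tk by simp
          have "n < (n + 2 + Suc k - g) + g" using gn by simp
          then obtain w where w: "w \<in> ext n (Suc (n + 2 + Suc k - g))" "dF n f w = x t"
            using KVB xt dxt by blast
          have e: "Suc (n + 2 + Suc k - g) = n + 2 + Suc (Suc k) - g" using gn by simp
          define z where "z c = (if c = t then w else 0)" for c
          have zT: "z \<in> Tmod n g (Suc (Suc k))"
          proof (rule TmodI)
            fix c show "z c \<in> ext n (n + 2 + Suc (Suc k) - g)" unfolding z_def using w(1) e by simp
          next
            fix c assume "\<not> (c + 2 \<le> g \<and> c \<le> Suc (Suc k))"
            then have "c \<noteq> t" using tg tk by auto
            then show "z c = 0" unfolding z_def by simp
          qed
          have "\<forall>c. t \<le> c \<longrightarrow> Tdiff n f g (Suc (Suc k)) z c = x c"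
          proof (intro allI impI)
            fix c assume tc: "t \<le> c"
            show "Tdiff n f g (Suc (Suc k)) z c = x c"
            proof (cases "c = t")
              case True
              then show ?thesis using Tdiff_at[of t g "Suc (Suc k)" n f z] tg tk w(2)
                unfolding z_def by simp
            next
              case False
              then have "z c = 0" "z (c + 1) = 0" "x c = 0" using tc top unfolding z_def by auto
              then show ?thesis unfolding Tdiff_def by simp
            qed
          qed
          then show ?thesis using that zT by blast
        next
          case tk: False
          then have tSk: "t = Suc k" using True by simp
          have kg: "k + 2 \<le> g" using tg tSk by simp
          have "dF n f (x k) + dY n (x (k + 1)) = 0"
            using cyc'[of k] Tdiff_at[of k g "Suc k" n f x] kg by simp
          then have dYa: "dY n (x t) = - dF n f (x k)" using tSk by (simp add: eq_neg_iff_add_eq_0 add.commute)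
          have "dY n (dF n f (x t)) = - dF n f (dY n (x t))" by (simp add: dFdY)
          also have "\<dots> = 0" unfolding dYa dF_uminus dFdF by simp
          finally have acyc: "dY n (dF n f (x t)) = 0" .
          have a: "x t \<in> ext n (n + 2 + t - g)" using TmodD1[OF x tg] tSk by simp
          obtain w v where wv: "w \<in> ext n (n + 3 + t - g)" "v \<in> ext n (n + 3 + t - g)"
            "dF n f w - dY n v = x t" "g < t + 3 \<longrightarrow> v = 0"
            using bottom_step[OF KVB Zac gn tg a acyc] by blast
          have e: "n + 2 + Suc (Suc k) - g = n + 3 + t - g" using tSk by simp
          define z where "z c = (if c = t then w else if c = Suc t then - v else 0)" for c
          have zT: "z \<in> Tmod n g (Suc (Suc k))"
          proof (rule TmodI)
            fix c assume c: "c + 2 \<le> g" "c \<le> Suc (Suc k)"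
            show "z c \<in> ext n (n + 2 + Suc (Suc k) - g)" unfolding z_def e
              using wv(1) ext_uminus[OF wv(2)] by simp
          next
            fix c assume c: "\<not> (c + 2 \<le> g \<and> c \<le> Suc (Suc k))"
            show "z c = 0"
            proof (cases "c = Suc t")
              case True
              then have "g < t + 3" using c tSk by simp
              then show ?thesis using wv(4) True unfolding z_def by simp
            next
              case False
              moreover have "c \<noteq> t" using c tg tSk by auto
              ultimately show ?thesis unfolding z_def by simp
            qed
          qed
          have "\<forall>c. t \<le> c \<longrightarrow> Tdiff n f g (Suc (Suc k)) z c = x c"
          proof (intro allI impI)
            fix c assume tc: "t \<le> c"
            show "Tdiff n f g (Suc (Suc k)) z c = x c"
            proof (cases "c = t")
              case True
              have "Tdiff n f g (Suc (Suc k)) z c = dF n f (z t) + dY n (z (t + 1))"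
                using Tdiff_at[of t g "Suc (Suc k)" n f z] tg tSk True by simp
              also have "\<dots> = dF n f w - dY n v" unfolding z_def by (simp add: dY_uminus)
              finally show ?thesis using wv(3) True by simp
            next
              case False
              then have "\<not> (c + 2 \<le> g \<and> c + 1 \<le> Suc (Suc k))" using tc tSk by simp
              then have "Tdiff n f g (Suc (Suc k)) z c = 0" by (rule Tdiff_off)
              moreover have "x c = 0" using top tc False by simp
              ultimately show ?thesis by simp
            qed
          qed
          then show ?thesis using that zT by blast
        qed
      qed
      define x' where "x' = x - Tdiff n f g (Suc (Suc k)) z0"
      have x'T: "x' \<in> Tmod n g (Suc k)" unfolding x'_def by (rule Tmod_diff[OF x Tdiff_Tmod[OF z0]])
      have x'cyc: "Tdiff n f g (Suc k) x' = 0"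
        unfolding x'_def Tdiff_diff Tdiff_Tdiff[OF z0] cyc by simp
      have x'top: "\<forall>c. t \<le> c \<longrightarrow> x' c = 0" unfolding x'_def using z0x by simp
      obtain z1 where z1: "z1 \<in> Tmod n g (Suc (Suc k))" "Tdiff n f g (Suc (Suc k)) z1 = x'"
        using Suc.IH x'T x'cyc x'top by blast
      have "Tdiff n f g (Suc (Suc k)) (z0 + z1) = x" unfolding Tdiff_add z1(2) x'_def by simp
      then show "\<exists>z\<in>Tmod n g (Suc (Suc k)). Tdiff n f g (Suc (Suc k)) z = x"
        using Tmod_add[OF z0 z1(1)] by blast
    qed
  qed
  assume x: "x \<in> Tmod n g (Suc k)" and cyc: "Tdiff n f g (Suc k) x = 0"
  have "\<forall>c. g \<le> c \<longrightarrow> x c = 0" using TmodD2[OF x] by simp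
  then show ?thesis using main[of g] x cyc by blast
qed

lemma T0_exact:
  fixes f :: "nat \<Rightarrow> 'a::comm_ring_1"
  assumes KVB: "\<And>i z. n < i + g \<Longrightarrow> z \<in> ext n i \<Longrightarrow> dF n f z = 0 \<Longrightarrow> \<exists>w\<in>ext n (Suc i). dF n f w = z"
    and Zac: "Z_acyclic n f" and gn: "g \<le> n"
    and x: "x \<in> Tmod n g 0" and cyc: "Taug n f x = 0"
  shows "\<exists>z\<in>Tmod n g 1. Tdiff n f g 1 z = x"
proof (cases "2 \<le> g")
  case False
  then have "x = 0" using TmodD2[OF x] by (auto simp: fun_eq_iff)
  then show ?thesis using Tmod_zero Tdiff_zero by metis
next
  case True
  have tg: "0 + 2 \<le> g" using True by simp
  have a: "x 0 \<in> ext n (n + 2 + 0 - g)" using TmodD1[OF x] True by simp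
  have acyc: "dY n (dF n f (x 0)) = 0" using cyc unfolding Taug_def .
  obtain w v where wv: "w \<in> ext n (n + 3 + 0 - g)" "v \<in> ext n (n + 3 + 0 - g)"
    "dF n f w - dY n v = x 0" "g < 0 + 3 \<longrightarrow> v = 0"
    using bottom_step[OF KVB Zac gn tg a acyc] by blast
  define z where "z c = (if c = 0 then w else if c = 1 then - v else 0)" for c :: nat
  have e: "n + 2 + 1 - g = n + 3 + 0 - g" by simp
  have zT: "z \<in> Tmod n g 1"
  proof (rule TmodI)
    fix c assume c: "c + 2 \<le> g" "c \<le> 1"
    show "z c \<in> ext n (n + 2 + 1 - g)" unfolding z_def e
      using wv(1) ext_uminus[OF wv(2)] by simp
  next
    fix c assume c: "\<not> (c + 2 \<le> g \<and> c \<le> 1)"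
    show "z c = 0"
    proof (cases "c = 1")
      case True
      then have "g < 0 + 3" using c by simp
      then show ?thesis using wv(4) True unfolding z_def by simp
    next
      case False
      moreover have "c \<noteq> 0" using c True by auto
      ultimately show ?thesis unfolding z_def by simp
    qed
  qed
  have "Tdiff n f g 1 z = x"
  proof
    fix c
    show "Tdiff n f g 1 z c = x c"
    proof (cases "c = 0")
      case True
      have "Tdiff n f g 1 z c = dF n f (z 0) + dY n (z (0 + 1))"
        using Tdiff_at[of 0 g 1 n f z] tg True by simp
      also have "\<dots> = dF n f w - dY n v" unfolding z_def by (simp add: dY_uminus)
      finally show ?thesis using wv(3) True by simp
    next
      case False
      then have "\<not> (c + 2 \<le> g \<and> c + 1 \<le> 1)" by simp
      then have "Tdiff n f g 1 z c = 0" by (rule Tdiff_off)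
      moreover have "x c = 0" using TmodD2[OF x] False by simp
      ultimately show ?thesis by simp
    qed
  qed
  then show ?thesis using zT by blast
qed

theorem proposition4p5:
  fixes m :: "'a::comm_ring_1 set" and f :: "nat \<Rightarrow> 'a" and n d g :: nat
  assumes "cohen_macaulay_local m d"
    and "minimally_generates f n (ideal_gen f n)"
    and "ideal_height_eq (ideal_gen f n) g"
    and "1 \<le> g"
  shows "L_is_complex n f g \<and> (Z_acyclic n f \<longrightarrow> L_acyclic n f g)"
proof -
  interpret cmctx m d by unfold_locales (rule assms(1))
  have kv: "(\<forall>i. n < i + g \<longrightarrow> KV n f {0} i) \<and> g \<le> n" by (rule koszul_vanish[OF assms(3)])
  then have gn: "g \<le> n" by blast
  have KVB: "\<And>i z. n < i + g \<Longrightarrow> z \<in> ext n i \<Longrightarrow> dF n f z = 0 \<Longrightarrow> \<exists>w\<in>ext n (Suc i). dF n f w = z"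
    using kv KV_lift by blast
  have g1: "1 \<le> g" by (rule assms(4))
  have n1: "n - g < n" using gn g1 by simp
  have c1: "\<forall>x\<in>Tmod n g 0. Taug n f x \<in> Zmod n f (n - g)"
  proof
    fix x :: "nat \<Rightarrow> nat set \<Rightarrow> 'a polyB" assume x: "x \<in> Tmod n g 0"
    have te: "Taug n f x \<in> ext n (n - g)"
    proof (cases "0 + 2 \<le> g")
      case True
      have "x 0 \<in> ext n (n + 2 + 0 - g)" using TmodD1[OF x True] by simp
      then have "dF n f (x 0) \<in> ext n (n + 2 + 0 - g - 1)" by (rule dF_ext)
      then have "dY n (dF n f (x 0)) \<in> ext n (n + 2 + 0 - g - 1 - 1)" by (rule dY_ext)
      moreover have "n + 2 + 0 - g - 1 - 1 = n - g" using gn by simp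
      ultimately show ?thesis unfolding Taug_def by simp
    next
      case False
      then have "x 0 = 0" using TmodD2[OF x] by simp
      then show ?thesis unfolding Taug_def by simp
    qed
    have "dF n f (Taug n f x) = 0" unfolding Taug_def by (simp add: dFdY dFdF)
    then show "Taug n f x \<in> Zmod n f (n - g)" unfolding Zmod_def using n1 te by simp
  qed
  have c2: "\<forall>k. \<forall>x\<in>Tmod n g (Suc k). Tdiff n f g (Suc k) x \<in> Tmod n g k"
    using Tdiff_Tmod by blast
  have c3: "0 < n - g \<longrightarrow> (\<forall>x\<in>Tmod n g 0. dY n (Taug n f x) = 0)"
    unfolding Taug_def by (simp add: dYdY)
  have c4: "\<forall>x\<in>Tmod n g 1. Taug n f (Tdiff n f g 1 x) = 0"
  proof
    fix x :: "nat \<Rightarrow> nat set \<Rightarrow> 'a polyB" assume x: "x \<in> Tmod n g 1"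
    show "Taug n f (Tdiff n f g 1 x) = 0"
    proof (cases "0 + 2 \<le> g")
      case True
      have "Tdiff n f g 1 x 0 = dF n f (x 0) + dY n (x (0 + 1))"
        using Tdiff_at[of 0 g 1 n f x] True by simp
      then show ?thesis unfolding Taug_def by (simp add: dF_add dFdF dFdY dY_uminus dYdY)
    next
      case False
      then have "Tdiff n f g 1 x 0 = 0" by (intro Tdiff_off) simp
      then show ?thesis unfolding Taug_def by simp
    qed
  qed
  have c5: "\<forall>k. \<forall>x\<in>Tmod n g (Suc (Suc k)). Tdiff n f g (Suc k) (Tdiff n f g (Suc (Suc k)) x) = 0"
    using Tdiff_Tdiff by blast
  have LC: "L_is_complex n f g" unfolding L_is_complex_def using c1 c2 c3 c4 c5 by blast
  have LA: "L_acyclic n f g" if Zac: "Z_acyclic n f"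
  proof -
    have a1: "\<forall>i. 1 \<le> i \<longrightarrow> i < n - g \<longrightarrow>
        (\<forall>x\<in>Zmod n f i. dY n x = 0 \<longrightarrow> (\<exists>z\<in>Zmod n f (i+1). dY n z = x))"
      using Zac unfolding Z_acyclic_def by auto
    have a2: "1 \<le> n - g \<longrightarrow>
        (\<forall>x\<in>Zmod n f (n - g). dY n x = 0 \<longrightarrow> (\<exists>t\<in>Tmod n g 0. Taug n f t = x))"
    proof (intro impI ballI)
      fix x assume ng: "1 \<le> n - g" and x: "x \<in> Zmod n f (n - g)" and cx: "dY n x = 0"
      obtain z where z: "z \<in> Zmod n f (n - g + 1)" "dY n z = x"
        using Zac ng n1 x cx unfolding Z_acyclic_def by blast
      show "\<exists>t\<in>Tmod n g 0. Taug n f t = x"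
      proof (cases "n - g + 1 < n")
        case False
        then have "z = 0" using z unfolding Zmod_def by simp
        then have "x = 0" using z by simp
        then show ?thesis using Tmod_zero unfolding Taug_def by (metis dF_zero dY_zero zero_fun_apply)
      next
        case True
        then have zz: "z \<in> ext n (n - g + 1)" "dF n f z = 0" using z unfolding Zmod_def by auto
        have "n < (n - g + 1) + g" using gn by simp
        then obtain w where w: "w \<in> ext n (Suc (n - g + 1))" "dF n f w = z" using KVB zz by blast
        have g2: "0 + 2 \<le> g" using True gn by simp
        define t where "t c = (if c = 0 then w else 0)" for c :: nat
        have "t \<in> Tmod n g 0"
        proof (rule TmodI)
          fix c assume "c + 2 \<le> g" "c \<le> 0"
          moreover have "Suc (n - g + 1) = n + 2 + 0 - g" using g2 gn by simp
          ultimately show "t c \<in> ext n (n + 2 + 0 - g)" unfolding t_def using w(1) by simp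
        next
          fix c assume "\<not> (c + 2 \<le> g \<and> c \<le> 0)"
          then have "c \<noteq> 0" using g2 by auto
          then show "t c = 0" unfolding t_def by simp
        qed
        moreover have "Taug n f t = x" unfolding Taug_def t_def using w(2) z(2) by simp
        ultimately show ?thesis by blast
      qed
    qed
    have a3: "\<forall>x\<in>Tmod n g 0. Taug n f x = 0 \<longrightarrow> (\<exists>z\<in>Tmod n g 1. Tdiff n f g 1 z = x)"
      using T0_exact[OF KVB Zac gn] by blast
    have a4: "\<forall>k. \<forall>x\<in>Tmod n g (Suc k). Tdiff n f g (Suc k) x = 0 \<longrightarrow>
        (\<exists>z\<in>Tmod n g (Suc (Suc k)). Tdiff n f g (Suc (Suc k)) z = x)"
      using chase[OF KVB Zac gn] by blast
    show ?thesis unfolding L_acyclic_def using a1 a2 a3 a4 by blast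
  qed
  show ?thesis using LC LA by blast
qed

end
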